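(* Assume the Construction below. Then for every $n\geq 1$ the following hold in $D(0,1/2)\times\mathbb{D}$: (i) $\overline{X_{n+1}}\subset X_n$; more precisely, for every $s'=(s,\sigma)\in\mathcal S_{n+1}$ one has $\overline{X_{n+1,s'}}\subset X^{\mathrm{int}}_{n+1,s,\sigma}\subset X_{n,s}$; (ii) $X_{n+1}$ does not contain the graph of any continuous (in particular of any holomorphic) function defined over $D(a_{n+1},r_{n+1})$, relative to the projection $\pi_0(z,w)=z$ if $n$ is even, and relative to the projection $\pi_1(z,w)=z+\frac{w}{100}$ if $n$ is odd; (iii) for each $s\in\mathcal S_n$ and each $\alpha\in\mathbb{C}$ with $|\alpha|<2\delta_n$, the analytic set $\{P_{n,s}=\alpha\}$ is horizontal in $D(0,1/2)\times\mathbb{D}$, has degree $2^n$ over the $z$-coordinate, and is an unramified covering (of degree $2^n$) over $\{3/8\leq|z|\leq 1/2\}$ relative to $\pi_0$. Moreover, if $s_1\neq s_2$ then $\{P_{n,s_1}=\alpha\}$ and $\{P_{n,s_2}=\alpha\}$ are disjoint.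
   Context: Notation: $D(a,r)$ is the open disk of center $a$ and radius $r$ in $\mathbb{C}$, $\mathbb{D}=D(0,1)$, and $\mathbb{Z}^2$ is identified with the Gaussian integers $\mathbb{Z}+i\mathbb{Z}\subset\mathbb{C}$. A subset of $D(0,1/2)\times\mathbb{D}$ is called horizontal if it is contained in $D(0,1/2)\times D(0,1-\varepsilon)$ for some $\varepsilon>0$. Construction. Let $(a_n)_{n\geq1}$ be a sequence of points of $D(0,1/4)$ such that both subsequences $(a_{2p})$ and $(a_{2p+1})$ are dense in $D(0,1/4)$. Put $A_n(z,w)=z-a_n$ if $n$ is odd and $A_n(z,w)=z+\frac{w}{100}-a_n$ if $n$ is even. Let $(r_n)_{n\geq1}$ be a sequence of positive reals decreasing to $0$ with $r_n\leq 1/10$, and $(m_n)_{n\geq1}$ a sequence of positive integers. Define $\delta_0=1/2$, $\delta_{n+1}=\frac{\delta_n^2 r_{n+1}}{4m_{n+1}^2}$ and $\varepsilon_{n+1}=\frac{\delta_n^2}{2m_{n+1}^2}$. Put $\Sigma_{n+1}=\overline{D}\big(0,\delta_n(1-\frac1{m_{n+1}})\big)\cap\frac{3\delta_n}{m_{n+1}}\mathbb{Z}^2$ (a finite set). Let $\mathcal S_0=\{0\}$, $P_{0,0}(z,w)=w$, and inductively $\mathcal S_{n+1}=\mathcal S_n\times\Sigma_{n+1}$ and, for $s'=(s,\sigma)\in\mathcal S_{n+1}$, $P_{n+1,s'}=(P_{n,s}-\sigma)^2-\varepsilon_{n+1}A_{n+1}$. Set (all sets taken in $D(0,1/2)\times\mathbb{D}$)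 $X_{n,s}=\{|P_{n,s}|<\delta_n\}$, $X_n=\bigcup_{s\in\mathcal S_n}X_{n,s}$, and $X^{\mathrm{int}}_{n+1,s,\sigma}=\{|P_{n,s}-\sigma|<\delta_n/m_{n+1}\}$ for $s\in\mathcal S_n,\sigma\in\Sigma_{n+1}$. *)

theory Defs
  imports "HOL-Analysis.Analysis"
begin

definition Omega :: "(complex \<times> complex) set" where
  "Omega = ball 0 (1/2) \<times> ball 0 1"

definition horizontal :: "(complex \<times> complex) set \<Rightarrow> bool" where
  "horizontal Z \<longleftrightarrow> (\<exists>e>0. Z \<subseteq> ball 0 (1/2) \<times> ball 0 (1 - e))"

definition Afun :: "(nat \<Rightarrow> complex) \<Rightarrow> nat \<Rightarrow> complex \<times> complex \<Rightarrow> complex" where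
  "Afun a n p = (if odd n then fst p - a n else fst p + snd p / 100 - a n)"

fun delta :: "(nat \<Rightarrow> real) \<Rightarrow> (nat \<Rightarrow> nat) \<Rightarrow> nat \<Rightarrow> real" where
  "delta r m 0 = 1/2"
| "delta r m (Suc n) = (delta r m n)^2 * r (Suc n) / (4 * (real (m (Suc n)))^2)"

definition eps :: "(nat \<Rightarrow> real) \<Rightarrow> (nat \<Rightarrow> nat) \<Rightarrow> nat \<Rightarrow> real" where
  "eps r m n = (delta r m (n - 1))^2 / (2 * (real (m n))^2)"

text \<open>Sigma_{n+1} = closed disk of radius delta_n (1 - 1/m_{n+1}) intersected with
  the lattice (3 delta_n / m_{n+1}) Z[i].  SigmaSet r m n denotes Sigma_{n+1}.\<close>
definition SigmaSet :: "(nat \<Rightarrow> real) \<Rightarrow> (nat \<Rightarrow> nat) \<Rightarrow> nat \<Rightarrow> complex set" where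
  "SigmaSet r m n = cball 0 (delta r m n * (1 - 1 / real (m (Suc n)))) \<inter>
     {complex_of_real (3 * delta r m n / real (m (Suc n))) * (of_int p + \<i> * of_int q) | p q :: int. True}"

text \<open>Index sets S_n, elements encoded as lists: S_0 = {[]} (the single index 0),
  and (s, sigma) in S_{n+1} is encoded as sigma # s.\<close>
fun Sset :: "(nat \<Rightarrow> real) \<Rightarrow> (nat \<Rightarrow> nat) \<Rightarrow> nat \<Rightarrow> complex list set" where
  "Sset r m 0 = {[]}"
| "Sset r m (Suc n) = {\<sigma> # s | \<sigma> s. s \<in> Sset r m n \<and> \<sigma> \<in> SigmaSet r m n}"

fun Pfun :: "(nat \<Rightarrow> complex) \<Rightarrow> (nat \<Rightarrow> real) \<Rightarrow> (nat \<Rightarrow> nat) \<Rightarrow> complex list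
              \<Rightarrow> complex \<times> complex \<Rightarrow> complex" where
  "Pfun a r m [] p = snd p"
| "Pfun a r m (\<sigma> # s) p =
     (Pfun a r m s p - \<sigma>)^2 - complex_of_real (eps r m (Suc (length s))) * Afun a (Suc (length s)) p"

definition Xs :: "(nat \<Rightarrow> complex) \<Rightarrow> (nat \<Rightarrow> real) \<Rightarrow> (nat \<Rightarrow> nat) \<Rightarrow> nat \<Rightarrow> complex list
                  \<Rightarrow> (complex \<times> complex) set" where
  "Xs a r m n s = {p \<in> Omega. cmod (Pfun a r m s p) < delta r m n}"

definition Xn :: "(nat \<Rightarrow> complex) \<Rightarrow> (nat \<Rightarrow> real) \<Rightarrow> (nat \<Rightarrow> nat) \<Rightarrow> nat
                  \<Rightarrow> (complex \<times> complex) set" where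
  "Xn a r m n = (\<Union>s\<in>Sset r m n. Xs a r m n s)"

definition Xint :: "(nat \<Rightarrow> complex) \<Rightarrow> (nat \<Rightarrow> real) \<Rightarrow> (nat \<Rightarrow> nat) \<Rightarrow> nat \<Rightarrow> complex list
                  \<Rightarrow> complex \<Rightarrow> (complex \<times> complex) set" where
  "Xint a r m n s \<sigma> = {p \<in> Omega. cmod (Pfun a r m s p - \<sigma>) < delta r m n / real (m (Suc n))}"

definition Level :: "(nat \<Rightarrow> complex) \<Rightarrow> (nat \<Rightarrow> real) \<Rightarrow> (nat \<Rightarrow> nat) \<Rightarrow> complex list
                  \<Rightarrow> complex \<Rightarrow> (complex \<times> complex) set" where
  "Level a r m s \<alpha> = {p \<in> Omega. Pfun a r m s p = \<alpha>}"

definition fibre :: "(complex \<times> complex) set \<Rightarrow> complex \<Rightarrow> complex set" where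
  "fibre Z z = {w. (z, w) \<in> Z}"

text \<open>Z (a subset of the ambient domain) has degree d over the z-coordinate:
  it is a d-sheeted branched covering of D(0,1/2) via pi_0, i.e. every fibre is
  finite with at most d points, and outside a closed discrete subset E of D(0,1/2)
  (a proper analytic subset of the disk) every fibre has exactly d points.\<close>
definition degree_over_z :: "(complex \<times> complex) set \<Rightarrow> nat \<Rightarrow> bool" where
  "degree_over_z Z d \<longleftrightarrow>
     (\<forall>z\<in>ball 0 (1/2). finite (fibre Z z) \<and> card (fibre Z z) \<le> d) \<and>
     (\<exists>E. (\<forall>z\<in>ball 0 (1/2). \<exists>e>0. ball z e \<inter> E \<subseteq> {z}) \<and>
          (\<forall>z\<in>ball 0 (1/2) - E. card (fibre Z z) = d))"

definition construction :: "(nat \<Rightarrow> complex) \<Rightarrow> (nat \<Rightarrow> real) \<Rightarrow> (nat \<Rightarrow> nat) \<Rightarrow> bool" where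
  "construction a r m \<longleftrightarrow>
     (\<forall>n\<ge>1. a n \<in> ball 0 (1/4)) \<and>
     ball 0 (1/4) \<subseteq> closure {a (2*p) | p. p \<ge> 1} \<and>
     ball 0 (1/4) \<subseteq> closure {a (2*p+1) | p. True} \<and>
     (\<forall>n\<ge>1. 0 < r n \<and> r n \<le> 1/10 \<and> r (Suc n) \<le> r n) \<and>
     (r \<longlonglongrightarrow> 0) \<and>
     (\<forall>n\<ge>1. 0 < m n)"

end

theory Submission
  imports Defs "Subresultants.Subresultant_Gcd" "HOL-Computational_Algebra.Field_as_Ring"
    "HOL-Computational_Algebra.Fundamental_Theorem_Algebra"
begin

locale cons =
  fixes a :: "nat \<Rightarrow> complex" and r :: "nat \<Rightarrow> real" and m :: "nat \<Rightarrow> nat"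
  assumes cons: "construction a r m"
begin

abbreviation "dl \<equiv> delta r m"
abbreviation "MM k \<equiv> real (m (Suc k))"
abbreviation "P \<equiv> Pfun a r m"

declare Pfun.simps(2)[simp del] delta.simps(2)[simp del]
lemmas delta_Suc = delta.simps(2)

lemma M_ge1: "1 \<le> real (m (Suc k))"
proof -
  have "0 < m (Suc k)" using cons unfolding construction_def by auto
  then show ?thesis by simp
qed

lemma r_pos: "0 < r (Suc k)" and r_le: "r (Suc k) \<le> 1/10"
  using cons unfolding construction_def by auto

lemma a_bound: "1 \<le> k \<Longrightarrow> cmod (a k) < 1/4"
  using cons unfolding construction_def by auto

lemma delta_pos: "0 < dl k"
proof (induction k)
  case 0 then show ?case by simp
next
  case (Suc k)
  have "0 < MM k" using M_ge1[of k] by linarith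
  then show ?case using Suc r_pos[of k] by (simp add: delta_Suc)
qed

lemma eps_Suc: "eps r m (Suc k) = dl k ^ 2 / (2 * MM k ^ 2)"
  by (simp add: eps_def)

lemma two_delta_Suc: "2 * dl (Suc k) = eps r m (Suc k) * r (Suc k)"
  by (simp add: eps_def delta_Suc field_simps)

lemma eps_pos: "0 < eps r m (Suc k)"
  using delta_pos[of k] M_ge1[of k] by (simp add: eps_Suc)

lemma Sset_length: "s \<in> Sset r m k \<Longrightarrow> length s = k"
  by (induction k arbitrary: s) auto

lemma Sset_Cons: "\<sigma> # t \<in> Sset r m (Suc k) \<longleftrightarrow> t \<in> Sset r m k \<and> \<sigma> \<in> SigmaSet r m k"
  by auto

lemma Sigma_norm: "\<sigma> \<in> SigmaSet r m k \<Longrightarrow> cmod \<sigma> \<le> dl k * (1 - 1 / MM k)"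
  by (auto simp: SigmaSet_def)

lemma gauss_ge1:
  fixes x y :: int
  assumes "(x, y) \<noteq> (0, 0)"
  shows "1 \<le> cmod (of_int x + \<i> * of_int y)"
proof (cases "x = 0")
  case True
  then have "y \<noteq> 0" using assms by auto
  then have "1 \<le> \<bar>Im (of_int x + \<i> * of_int y)\<bar>" by simp
  then show ?thesis using abs_Im_le_cmod order_trans by blast
next
  case False
  then have "1 \<le> \<bar>Re (of_int x + \<i> * of_int y)\<bar>" by simp
  then show ?thesis using abs_Re_le_cmod order_trans by blast
qed

lemma Sigma_sep:
  assumes "\<sigma>1 \<in> SigmaSet r m k" "\<sigma>2 \<in> SigmaSet r m k" "\<sigma>1 \<noteq> \<sigma>2"
  shows "3 * dl k / MM k \<le> cmod (\<sigma>1 - \<sigma>2)"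
proof -
  define c where "c = 3 * dl k / MM k"
  have cpos: "0 < c" using delta_pos[of k] M_ge1[of k] by (simp add: c_def)
  obtain p1 q1 where 1: "\<sigma>1 = complex_of_real c * (of_int p1 + \<i> * of_int q1)"
    using assms(1) by (auto simp: SigmaSet_def c_def)
  obtain p2 q2 where 2: "\<sigma>2 = complex_of_real c * (of_int p2 + \<i> * of_int q2)"
    using assms(2) by (auto simp: SigmaSet_def c_def)
  have ne: "(p1 - p2, q1 - q2) \<noteq> (0, 0)" using assms(3) 1 2 by auto
  have "\<sigma>1 - \<sigma>2 = complex_of_real c * (of_int (p1 - p2) + \<i> * of_int (q1 - q2))"
    unfolding 1 2 by (simp add: algebra_simps)
  then have "cmod (\<sigma>1 - \<sigma>2) = c * cmod (of_int (p1 - p2) + \<i> * of_int (q1 - q2))"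
    using cpos by (simp add: norm_mult)
  also have "\<dots> \<ge> c * 1" using gauss_ge1[OF ne] cpos by (intro mult_left_mono) auto
  finally show ?thesis by (simp add: c_def)
qed

lemma finite_Sigma: "finite (SigmaSet r m k)"
proof -
  define c where "c = 3 * dl k / MM k"
  have cpos: "0 < c" using delta_pos[of k] M_ge1[of k] by (simp add: c_def)
  define N :: int where "N = \<lceil>MM k\<rceil>"
  have "SigmaSet r m k \<subseteq> (\<lambda>(p, q). complex_of_real c * (of_int p + \<i> * of_int q)) ` ({-N..N} \<times> {-N..N})"
  proof
    fix \<sigma> assume s: "\<sigma> \<in> SigmaSet r m k"
    then obtain p q where pq: "\<sigma> = complex_of_real c * (of_int p + \<i> * of_int q)"
      by (auto simp: SigmaSet_def c_def)
    have "dl k * (1 - 1 / MM k) \<le> dl k"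
      using delta_pos[of k] M_ge1[of k] by (intro mult_left_le) auto
    then have "cmod \<sigma> \<le> dl k" using Sigma_norm[OF s] by linarith
    then have "c * cmod (of_int p + \<i> * of_int q) \<le> dl k" using pq cpos by (simp add: norm_mult)
    then have g: "cmod (of_int p + \<i> * of_int q) \<le> MM k / 3"
      using cpos delta_pos[of k] M_ge1[of k] by (simp add: c_def field_simps)
    have "\<bar>of_int p :: real\<bar> \<le> MM k / 3"
      using abs_Re_le_cmod[of "of_int p + \<i> * of_int q"] g by simp
    moreover have "\<bar>of_int q :: real\<bar> \<le> MM k / 3"
      using abs_Im_le_cmod[of "of_int p + \<i> * of_int q"] g by simp
    moreover have "MM k / 3 \<le> real_of_int N" unfolding N_def
      using M_ge1[of k] le_of_int_ceiling[of "MM k"] by linarith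
    ultimately have "real_of_int \<bar>p\<bar> \<le> real_of_int N" "real_of_int \<bar>q\<bar> \<le> real_of_int N"
      by auto
    then have "\<bar>p\<bar> \<le> N" "\<bar>q\<bar> \<le> N" by (simp_all only: of_int_le_iff)
    then show "\<sigma> \<in> (\<lambda>(p, q). complex_of_real c * (of_int p + \<i> * of_int q)) ` ({-N..N} \<times> {-N..N})"
      using pq by (auto intro!: image_eqI[of _ _ "(p,q)"])
  qed
  then show ?thesis by (rule finite_subset) auto
qed

lemma finite_Sset: "finite (Sset r m k)"
proof (induction k)
  case 0 then show ?case by simp
next
  case (Suc k)
  have "Sset r m (Suc k) = (\<lambda>(\<sigma>, t). \<sigma> # t) ` (SigmaSet r m k \<times> Sset r m k)"
    by auto
  then show ?case using Suc finite_Sigma by simp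
qed

lemma cont_A: "continuous_on UNIV (Afun a k)"
  unfolding Afun_def by (cases "odd k") (auto intro!: continuous_intros)

lemma cont_P: "continuous_on UNIV (P s)"
proof (induction s)
  case Nil then show ?case by (simp add: continuous_on_snd)
next
  case (Cons \<sigma> s)
  show ?case using Cons cont_A
    by (simp add: Pfun.simps(2), intro continuous_intros) auto
qed

lemma A_upper:
  assumes "1 \<le> k" "cmod z \<le> 1/2" "cmod w \<le> u" "1 \<le> u"
  shows "cmod (Afun a k (z, w)) \<le> 19/25 * u"
proof -
  have ak: "cmod (a k) < 1/4" using a_bound assms(1) by auto
  show ?thesis
  proof (cases "odd k")
    case True
    have "cmod (z - a k) \<le> cmod z + cmod (a k)" by (rule norm_triangle_ineq4)
    then show ?thesis using True ak assms by (simp add: Afun_def)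
  next
    case False
    have "cmod (z + w / 100 - a k) \<le> cmod (z + w/100) + cmod (a k)" by (rule norm_triangle_ineq4)
    also have "\<dots> \<le> cmod z + cmod (w/100) + cmod (a k)" using norm_triangle_ineq[of z "w/100"] by simp
    finally have "cmod (z + w / 100 - a k) \<le> cmod z + cmod (w/100) + cmod (a k)" .
    then show ?thesis using False ak assms by (simp add: Afun_def)
  qed
qed

lemma A_lower:
  assumes "1 \<le> k" "3/8 \<le> cmod z" "cmod w \<le> 1/2"
  shows "3/25 \<le> cmod (Afun a k (z, w))"
proof -
  have ak: "cmod (a k) < 1/4" using a_bound assms(1) by auto
  show ?thesis
  proof (cases "odd k")
    case True
    have "cmod z \<le> cmod (z - a k) + cmod (a k)" using norm_triangle_ineq[of "z - a k" "a k"] by simp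
    then show ?thesis using True ak assms by (simp add: Afun_def)
  next
    case False
    have "cmod z = cmod ((z + w / 100 - a k) - w/100 + a k)" by simp
    also have "\<dots> \<le> cmod ((z + w / 100 - a k) - w/100) + cmod (a k)" by (rule norm_triangle_ineq)
    also have "\<dots> \<le> cmod (z + w / 100 - a k) + cmod (w/100) + cmod (a k)"
      using norm_triangle_ineq4[of "z + w / 100 - a k" "w/100"] by simp
    finally have "cmod z \<le> cmod (z + w / 100 - a k) + cmod (w/100) + cmod (a k)" .
    then show ?thesis using False ak assms by (simp add: Afun_def)
  qed
qed

lemma P_Cons: "t \<in> Sset r m k \<Longrightarrow>
   P (\<sigma> # t) p = (P t p - \<sigma>)^2 - complex_of_real (eps r m (Suc k)) * Afun a (Suc k) p"
  by (simp add: Sset_length Pfun.simps(2))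

lemma step_sq:
  assumes t: "t \<in> Sset r m k" and z: "cmod z \<le> 1/2" and w: "cmod w \<le> u" and u: "1 \<le> u"
    and h: "cmod (P (\<sigma> # t) (z, w)) \<le> 2 * dl (Suc k) * u"
  shows "cmod (P t (z, w) - \<sigma>)^2 \<le> 43/100 * u * (dl k / MM k)^2"
proof -
  define e where "e = eps r m (Suc k)"
  define A where "A = Afun a (Suc k) (z, w)"
  have epos: "0 < e" using eps_pos by (simp add: e_def)
  have eq: "(P t (z, w) - \<sigma>)^2 = P (\<sigma> # t) (z, w) + complex_of_real e * A"
    using P_Cons[OF t] by (simp add: e_def A_def)
  have "cmod (P t (z, w) - \<sigma>)^2 = cmod ((P t (z, w) - \<sigma>)^2)" by (simp add: norm_power)
  also have "\<dots> \<le> cmod (P (\<sigma> # t) (z, w)) + e * cmod A"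
    unfolding eq using epos norm_triangle_ineq[of "P (\<sigma> # t) (z, w)" "complex_of_real e * A"]
    by (simp add: norm_mult)
  also have "\<dots> \<le> e * r (Suc k) * u + e * (19/25 * u)"
    using h A_upper[of "Suc k" z w u] z w u epos
    by (intro add_mono) (auto simp: two_delta_Suc e_def A_def)
  also have "\<dots> \<le> e * (1/10) * u + e * (19/25 * u)"
    using r_le[of k] epos u by (intro add_mono mult_right_mono mult_left_mono) auto
  also have "\<dots> = 43/100 * u * (dl k / MM k)^2"
    by (simp add: e_def eps_Suc power_divide field_simps)
  finally show ?thesis .
qed

lemma step_lt1:
  assumes t: "t \<in> Sset r m k" and z: "cmod z \<le> 1/2" and w: "cmod w \<le> 1"
    and h: "cmod (P (\<sigma> # t) (z, w)) \<le> 2 * dl (Suc k)"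
  shows "cmod (P t (z, w) - \<sigma>) < dl k / MM k"
proof -
  have pos: "0 < dl k / MM k" using delta_pos[of k] M_ge1[of k] by (intro divide_pos_pos) auto
  have "cmod (P t (z, w) - \<sigma>)^2 \<le> 43/100 * 1 * (dl k / MM k)^2"
    using step_sq[OF t z w order_refl] h by simp
  also have "\<dots> < (dl k / MM k)^2" using zero_less_power[OF pos, of 2] by linarith
  finally have "cmod (P t (z, w) - \<sigma>)^2 < (dl k / MM k)^2" .
  from power2_less_imp_less[OF this less_imp_le[OF pos]] show ?thesis .
qed

lemma step_u:
  assumes t: "t \<in> Sset r m k" and s: "\<sigma> \<in> SigmaSet r m k" and z: "cmod z \<le> 1/2" and w: "cmod w \<le> u" and u: "1 \<le> u"
    and h: "cmod (P (\<sigma> # t) (z, w)) \<le> 2 * dl (Suc k) * u"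
  shows "cmod (P t (z, w)) \<le> dl k * u"
proof -
  define y where "y = dl k / MM k"
  have d: "0 < dl k" using delta_pos by simp
  have M: "1 \<le> MM k" using M_ge1 by simp
  have pos: "0 < y" unfolding y_def using d M by (intro divide_pos_pos) auto
  have "cmod (P t (z, w) - \<sigma>)^2 \<le> 43/100 * u * (dl k / MM k)^2"
    using step_sq[OF t z w u h] .
  also have "\<dots> = 43/100 * u * y^2" by (simp only: y_def)
  also have "\<dots> \<le> 4/9 * u * u * y^2"
    using u pos by (intro mult_right_mono) auto
  also have "\<dots> = (2/3 * u * y)^2" by (simp add: power2_eq_square)
  finally have x2: "cmod (P t (z, w) - \<sigma>)^2 \<le> (2/3 * u * y)^2" .
  have x: "cmod (P t (z, w) - \<sigma>) \<le> 2/3 * u * y"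
    using power2_le_imp_le[OF x2] pos u by simp
  have "cmod (P t (z, w)) \<le> cmod \<sigma> + cmod (P t (z, w) - \<sigma>)"
    using norm_triangle_ineq[of \<sigma> "P t (z, w) - \<sigma>"] by simp
  also have "\<dots> \<le> dl k * (1 - 1 / MM k) + 2/3 * u * y" using Sigma_norm[OF s] x by linarith
  also have "\<dots> \<le> dl k * u"
  proof -
    have e1: "dl k * (1 - 1 / MM k) \<le> dl k * u * (1 - 1 / MM k)"
      using d u M by (intro mult_right_mono) auto
    have "0 \<le> u * y" using u pos by simp
    moreover have "dl k * u * (1 / MM k) = u * y" by (simp add: y_def)
    ultimately have e2: "2/3 * u * y \<le> dl k * u * (1 / MM k)" by linarith
    have e3: "dl k * u * (1 - 1 / MM k) + dl k * u * (1 / MM k) = dl k * u"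
      by (simp add: algebra_simps)
    show ?thesis using e1 e2 e3 by linarith
  qed
  finally show ?thesis .
qed

lemma descent:
  "t \<in> Sset r m k \<Longrightarrow> cmod z \<le> 1/2 \<Longrightarrow> cmod w \<le> u \<Longrightarrow> 1 \<le> u \<Longrightarrow>
   cmod (P t (z, w)) \<le> dl k * u \<Longrightarrow> cmod w \<le> u / 2"
proof (induction k arbitrary: t)
  case 0 then show ?case by simp
next
  case (Suc k)
  then obtain \<sigma> t' where t: "t = \<sigma> # t'" "t' \<in> Sset r m k" "\<sigma> \<in> SigmaSet r m k" by auto
  have "0 \<le> dl (Suc k) * u" using delta_pos[of "Suc k"] Suc.prems by simp
  then have "cmod (P (\<sigma> # t') (z, w)) \<le> 2 * dl (Suc k) * u"
    using Suc.prems t by simp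
  then have "cmod (P t' (z, w)) \<le> dl k * u" using step_u[OF t(2,3)] Suc.prems by blast
  then show ?case using Suc.IH[OF t(2)] Suc.prems by blast
qed

lemma root_bound:
  assumes s: "s \<in> Sset r m n" and n: "1 \<le> n" and al: "cmod \<alpha> < 2 * dl n"
    and z: "cmod z \<le> 1/2" and eq: "P s (z, w) = \<alpha>"
  shows "cmod w \<le> 1/2"
proof -
  obtain k where nk: "n = Suc k" using n by (cases n) auto
  obtain \<sigma> t where t: "s = \<sigma> # t" "t \<in> Sset r m k" "\<sigma> \<in> SigmaSet r m k" using s nk by auto
  define u where "u = max 1 (cmod w)"
  have u: "1 \<le> u" "cmod w \<le> u" by (auto simp: u_def)
  have "cmod (P (\<sigma> # t) (z, w)) \<le> 2 * dl (Suc k) * u"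
  proof -
    have "2 * dl n \<le> 2 * dl n * u" using delta_pos[of n] u by simp
    then show ?thesis using eq al t nk by simp
  qed
  then have "cmod (P t (z, w)) \<le> dl k * u" using step_u[OF t(2,3) z u(2) u(1)] by blast
  then have "cmod w \<le> u / 2" using descent[OF t(2) z u(2) u(1)] by blast
  then show ?thesis unfolding u_def by (cases "cmod w \<le> 1") auto
qed

lemma disj:
  "s1 \<in> Sset r m k \<Longrightarrow> s2 \<in> Sset r m k \<Longrightarrow> cmod z \<le> 1/2 \<Longrightarrow> cmod w \<le> 1 \<Longrightarrow>
   cmod (P s1 (z, w)) < 2 * dl k \<Longrightarrow> cmod (P s2 (z, w)) < 2 * dl k \<Longrightarrow> s1 = s2"
proof (induction k arbitrary: s1 s2)
  case 0 then show ?case by simp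
next
  case (Suc k)
  obtain \<sigma>1 t1 where t1: "s1 = \<sigma>1 # t1" "t1 \<in> Sset r m k" "\<sigma>1 \<in> SigmaSet r m k" using Suc.prems by auto
  obtain \<sigma>2 t2 where t2: "s2 = \<sigma>2 # t2" "t2 \<in> Sset r m k" "\<sigma>2 \<in> SigmaSet r m k" using Suc.prems by auto
  have h1: "cmod (P (\<sigma>1 # t1) (z, w)) \<le> 2 * dl (Suc k) * 1" using Suc.prems t1 by simp
  have h2: "cmod (P (\<sigma>2 # t2) (z, w)) \<le> 2 * dl (Suc k) * 1" using Suc.prems t2 by simp
  have l1: "cmod (P t1 (z, w) - \<sigma>1) < dl k / MM k" using step_lt1[OF t1(2)] h1 Suc.prems by simp
  have l2: "cmod (P t2 (z, w) - \<sigma>2) < dl k / MM k" using step_lt1[OF t2(2)] h2 Suc.prems by simp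
  have "cmod (P t1 (z, w)) \<le> dl k * 1" using step_u[OF t1(2,3) Suc.prems(3) Suc.prems(4) order_refl h1] .
  moreover have "cmod (P t2 (z, w)) \<le> dl k * 1" using step_u[OF t2(2,3) Suc.prems(3) Suc.prems(4) order_refl h2] .
  ultimately have tt: "t1 = t2" using Suc.IH[OF t1(2) t2(2)] Suc.prems delta_pos[of k] by simp
  show ?case
  proof (rule ccontr)
    assume "s1 \<noteq> s2"
    then have ne: "\<sigma>1 \<noteq> \<sigma>2" using tt t1 t2 by simp
    have "3 * dl k / MM k \<le> cmod (\<sigma>1 - \<sigma>2)" using Sigma_sep[OF t1(3) t2(3) ne] .
    also have "\<dots> \<le> cmod (P t1 (z, w) - \<sigma>1) + cmod (P t2 (z, w) - \<sigma>2)"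
    proof -
      have "\<sigma>1 - \<sigma>2 = (P t2 (z, w) - \<sigma>2) - (P t1 (z, w) - \<sigma>1)" using tt by simp
      then show ?thesis using norm_triangle_ineq4[of "P t2 (z, w) - \<sigma>2" "P t1 (z, w) - \<sigma>1"] by simp
    qed
    also have "\<dots> < 2 * (dl k / MM k)" using l1 l2 by simp
    finally show False using delta_pos[of k] M_ge1[of k] by (simp add: field_simps)
  qed
qed

end

context cons begin

lemma Omega_iff: "(z, w) \<in> Omega \<longleftrightarrow> cmod z < 1/2 \<and> cmod w < 1"
  by (simp add: Omega_def)

lemma cont_normP: "continuous_on UNIV (\<lambda>p. cmod (P s p))"
  using cont_P by (rule continuous_on_norm)

lemma closed_le: "closed {p. cmod (P s p) \<le> c}"
  by (rule closed_Collect_le[OF cont_normP continuous_on_const])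

lemma open_Xs: "open (Xs a r m k s)"
proof -
  have "Xs a r m k s = Omega \<inter> {p. cmod (P s p) < dl k}" by (auto simp: Xs_def)
  moreover have "open Omega" by (simp add: Omega_def open_Times)
  moreover have "open {p. cmod (P s p) < dl k}"
    by (rule open_Collect_less[OF cont_normP continuous_on_const])
  ultimately show ?thesis by auto
qed

lemma closure_Xs: "closure (Xs a r m k s) \<subseteq> {p. cmod (P s p) \<le> dl k}"
  by (rule closure_minimal) (auto simp: Xs_def closed_le)

lemma part_i_a:
  assumes s: "s \<in> Sset r m n" and \<sigma>: "\<sigma> \<in> SigmaSet r m n"
  shows "Omega \<inter> closure (Xs a r m (Suc n) (\<sigma> # s)) \<subseteq> Xint a r m n s \<sigma>"
proof
  fix p assume p: "p \<in> Omega \<inter> closure (Xs a r m (Suc n) (\<sigma> # s))"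
  obtain z w where pzw: "p = (z, w)" by fastforce
  have zw: "cmod z < 1/2" "cmod w < 1" using p pzw Omega_iff by auto
  have "cmod (P (\<sigma> # s) (z, w)) \<le> dl (Suc n)" using p pzw closure_Xs by auto
  then have "cmod (P (\<sigma> # s) (z, w)) \<le> 2 * dl (Suc n)" using delta_pos[of "Suc n"] by linarith
  then have "cmod (P s (z, w) - \<sigma>) < dl n / MM n" using step_lt1[OF s] zw by simp
  then show "p \<in> Xint a r m n s \<sigma>" using p pzw by (simp add: Xint_def)
qed

lemma part_i_b:
  assumes \<sigma>: "\<sigma> \<in> SigmaSet r m n"
  shows "Xint a r m n s \<sigma> \<subseteq> Xs a r m n s"
proof
  fix p assume p: "p \<in> Xint a r m n s \<sigma>"
  have "cmod (P s p) \<le> cmod \<sigma> + cmod (P s p - \<sigma>)"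
    using norm_triangle_ineq[of \<sigma> "P s p - \<sigma>"] by simp
  also have "\<dots> < dl n * (1 - 1 / MM n) + dl n / MM n"
    using Sigma_norm[OF \<sigma>] p by (simp add: Xint_def)
  also have "\<dots> = dl n" by (simp add: algebra_simps)
  finally show "p \<in> Xs a r m n s" using p by (simp add: Xint_def Xs_def)
qed

lemma part_i_c: "Omega \<inter> closure (Xn a r m (Suc n)) \<subseteq> Xn a r m n"
proof -
  define C where "C = (\<Union>s\<in>Sset r m (Suc n). {p. cmod (P s p) \<le> dl (Suc n)})"
  have "closed C" unfolding C_def by (intro closed_UN finite_Sset) (auto simp: closed_le)
  moreover have "Xn a r m (Suc n) \<subseteq> C" unfolding Xn_def C_def by (rule UN_mono) (auto simp: Xs_def)
  ultimately have cl: "closure (Xn a r m (Suc n)) \<subseteq> C" by (rule closure_minimal[rotated])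
  show ?thesis
  proof
    fix p assume p: "p \<in> Omega \<inter> closure (Xn a r m (Suc n))"
    then obtain s' where s': "s' \<in> Sset r m (Suc n)" "cmod (P s' p) \<le> dl (Suc n)"
      using cl p unfolding C_def by blast
    then obtain \<sigma> s where ss: "s' = \<sigma> # s" "s \<in> Sset r m n" "\<sigma> \<in> SigmaSet r m n" by auto
    obtain z w where pzw: "p = (z, w)" by fastforce
    have zw: "cmod z < 1/2" "cmod w < 1" using p pzw Omega_iff by auto
    have "cmod (P (\<sigma> # s) (z, w)) \<le> 2 * dl (Suc n)"
      using s' ss pzw delta_pos[of "Suc n"] by simp
    then have "cmod (P s (z, w) - \<sigma>) < dl n / MM n" using step_lt1[OF ss(2)] zw by simp
    then have "p \<in> Xint a r m n s \<sigma>" using p pzw by (simp add: Xint_def)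
    then have "p \<in> Xs a r m n s" using part_i_b[OF ss(3)] by auto
    then show "p \<in> Xn a r m n" using ss(2) by (auto simp: Xn_def)
  qed
qed

lemma Xs_disj:
  assumes "s1 \<in> Sset r m k" "s2 \<in> Sset r m k" "s1 \<noteq> s2"
  shows "Xs a r m k s1 \<inter> Xs a r m k s2 = {}"
proof (rule ccontr)
  assume "Xs a r m k s1 \<inter> Xs a r m k s2 \<noteq> {}"
  then obtain z w where zw: "(z, w) \<in> Xs a r m k s1" "(z, w) \<in> Xs a r m k s2" by auto
  have "cmod z \<le> 1/2" "cmod w \<le> 1" using zw by (auto simp: Xs_def Omega_iff)
  moreover have "cmod (P s1 (z, w)) < 2 * dl k" "cmod (P s2 (z, w)) < 2 * dl k"
    using zw delta_pos[of k] by (auto simp: Xs_def)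
  ultimately show False using disj[OF assms(1,2)] assms(3) by blast
qed

lemma no_graph:
  fixes g :: "complex \<Rightarrow> complex \<times> complex"
  assumes cont: "continuous_on (ball (a (Suc n)) (r (Suc n))) g"
    and inX: "\<And>\<zeta>. \<zeta> \<in> ball (a (Suc n)) (r (Suc n)) \<Longrightarrow> g \<zeta> \<in> Xn a r m (Suc n)"
    and Aeq: "\<And>\<zeta>. \<zeta> \<in> ball (a (Suc n)) (r (Suc n)) \<Longrightarrow> Afun a (Suc n) (g \<zeta>) = \<zeta> - a (Suc n)"
  shows False
proof -
  define c where "c = a (Suc n)"
  define R where "R = r (Suc n)"
  define B where "B = ball c R"
  have Rpos: "0 < R" using r_pos by (simp add: R_def)
  have cB: "c \<in> B" using Rpos by (simp add: B_def)
  obtain s0 where s0: "s0 \<in> Sset r m (Suc n)" "g c \<in> Xs a r m (Suc n) s0"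
    using inX[of c] cB by (auto simp: B_def c_def R_def Xn_def)
  define U2 where "U2 = (\<Union>s\<in>Sset r m (Suc n) - {s0}. Xs a r m (Suc n) s)"
  have con: "connected (g ` B)" unfolding B_def
    by (rule connected_continuous_image[OF _ connected_ball]) (use cont in \<open>simp add: c_def R_def\<close>)
  have "open U2" unfolding U2_def using open_Xs by blast
  have sub: "g ` B \<subseteq> Xs a r m (Suc n) s0 \<union> U2"
  proof
    fix y assume "y \<in> g ` B"
    then obtain \<zeta> where \<zeta>: "\<zeta> \<in> B" "y = g \<zeta>" by auto
    obtain s where s: "s \<in> Sset r m (Suc n)" "g \<zeta> \<in> Xs a r m (Suc n) s"
      using inX[of \<zeta>] \<zeta> unfolding Xn_def B_def c_def R_def by blast
    show "y \<in> Xs a r m (Suc n) s0 \<union> U2"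
    proof (cases "s = s0")
      case True then show ?thesis using s \<zeta> by simp
    next
      case False
      then have "s \<in> Sset r m (Suc n) - {s0}" using s by blast
      then show ?thesis using s \<zeta> unfolding U2_def by blast
    qed
  qed
  have dj: "Xs a r m (Suc n) s0 \<inter> U2 \<inter> g ` B = {}"
    using Xs_disj[OF s0(1)] by (auto simp: U2_def)
  have "Xs a r m (Suc n) s0 \<inter> g ` B \<noteq> {}" using s0 cB by auto
  then have "U2 \<inter> g ` B = {}" using connectedD[OF con open_Xs \<open>open U2\<close> dj sub] by blast
  then have allin: "\<And>\<zeta>. \<zeta> \<in> B \<Longrightarrow> g \<zeta> \<in> Xs a r m (Suc n) s0" using sub by blast
  obtain \<sigma> t where st: "s0 = \<sigma> # t" "t \<in> Sset r m n" "\<sigma> \<in> SigmaSet r m n" using s0 by auto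
  define e where "e = eps r m (Suc n)"
  have epos: "0 < e" using eps_pos by (simp add: e_def)
  define G where "G = (\<lambda>\<zeta>. P t (g \<zeta>) - \<sigma>)"
  have contG: "continuous_on B G" unfolding G_def
    by (intro continuous_intros continuous_on_compose2[OF cont_P, of B g]) (use cont in \<open>auto simp: B_def c_def R_def\<close>)
  have est: "cmod (G \<zeta> ^ 2 - complex_of_real e * (\<zeta> - c)) < e * R / 2" if "\<zeta> \<in> B" for \<zeta>
  proof -
    have "P s0 (g \<zeta>) = G \<zeta> ^ 2 - complex_of_real e * (\<zeta> - c)"
      using P_Cons[OF st(2), of \<sigma> "g \<zeta>"] Aeq[of \<zeta>] that st(1)
      by (simp add: G_def e_def B_def c_def R_def)
    moreover have "cmod (P s0 (g \<zeta>)) < dl (Suc n)" using allin[OF that] by (simp add: Xs_def)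
    moreover have "dl (Suc n) = e * R / 2" using two_delta_Suc[of n] by (simp add: e_def R_def)
    ultimately show ?thesis by simp
  qed
  define \<rho> where "\<rho> = 3 * R / 4"
  have \<rho>pos: "0 < \<rho>" using Rpos by (simp add: \<rho>_def)
  define \<gamma> where "\<gamma> = (\<lambda>x::real. c + complex_of_real \<rho> * exp (\<i> * complex_of_real x))"
  define \<phi> where "\<phi> = (\<lambda>x::real. G (\<gamma> x) / exp (\<i> * complex_of_real (x / 2)))"
  have \<gamma>B: "\<gamma> x \<in> B" for x
  proof -
    have "dist c (\<gamma> x) = \<rho>" using \<rho>pos by (simp add: \<gamma>_def dist_norm norm_mult)
    then show ?thesis using Rpos by (simp add: B_def \<rho>_def)
  qed
  have cont\<phi>: "continuous_on {0..2*pi} (\<lambda>x. Re (\<phi> x))"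
  proof -
    have "continuous_on {0..2*pi} \<gamma>" unfolding \<gamma>_def by (intro continuous_intros)
    then have "continuous_on {0..2*pi} (\<lambda>x. G (\<gamma> x))"
      using \<gamma>B by (intro continuous_on_compose2[OF contG]) auto
    then show ?thesis unfolding \<phi>_def by (intro continuous_intros) auto
  qed
  have Re_ne: "Re (\<phi> x) \<noteq> 0" for x
  proof
    assume re0: "Re (\<phi> x) = 0"
    define E where "E = exp (\<i> * complex_of_real (x / 2))"
    have E0: "E \<noteq> 0" by (simp add: E_def)
    have E2: "E ^ 2 = exp (\<i> * complex_of_real x)"
      by (simp add: E_def power2_eq_square exp_add[symmetric] algebra_simps)
    have nE: "cmod E = 1" by (simp add: E_def)
    have "\<phi> x = \<i> * complex_of_real (Im (\<phi> x))" using re0 by (simp add: complex_eq_iff)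
    then have "\<phi> x ^ 2 = (\<i> * complex_of_real (Im (\<phi> x)))^2" by simp
    then have sq: "\<phi> x ^ 2 = - complex_of_real (Im (\<phi> x) ^ 2)" by (simp add: power_mult_distrib)
    have "G (\<gamma> x) = \<phi> x * E" by (simp add: \<phi>_def E_def)
    then have "G (\<gamma> x) ^ 2 - complex_of_real e * (\<gamma> x - c) = (\<phi> x ^ 2 - complex_of_real (e * \<rho>)) * E ^ 2"
      by (simp add: E2 \<gamma>_def power_mult_distrib algebra_simps)
    then have "cmod (G (\<gamma> x) ^ 2 - complex_of_real e * (\<gamma> x - c)) = cmod (\<phi> x ^ 2 - complex_of_real (e * \<rho>))"
      by (simp add: norm_mult norm_power nE)
    also have "\<dots> = Im (\<phi> x) ^ 2 + e * \<rho>"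
    proof -
      have "\<phi> x ^ 2 - complex_of_real (e * \<rho>) = - complex_of_real (Im (\<phi> x) ^ 2 + e * \<rho>)"
        using sq by simp
      moreover have "0 \<le> Im (\<phi> x) ^ 2 + e * \<rho>" using epos \<rho>pos by simp
      ultimately show ?thesis by (simp only: norm_minus_cancel norm_of_real)
    qed
    finally have "e * \<rho> \<le> cmod (G (\<gamma> x) ^ 2 - complex_of_real e * (\<gamma> x - c))" by simp
    moreover have "e * R / 2 < e * \<rho>" using epos Rpos by (simp add: \<rho>_def)
    ultimately show False using est[OF \<gamma>B[of x]] by linarith
  qed
  have \<phi>end: "\<phi> (2 * pi) = - \<phi> 0"
  proof -
    have "\<gamma> (2 * pi) = \<gamma> 0" by (simp add: \<gamma>_def exp_two_pi_i[unfolded mult.commute[of _ \<i>]] algebra_simps)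
    moreover have "exp (\<i> * complex_of_real (2 * pi / 2)) = -1" using exp_pi_i' by simp
    ultimately show ?thesis by (simp add: \<phi>_def)
  qed
  show False
  proof (cases "Re (\<phi> 0) < 0")
    case True
    have "Re (\<phi> 0) \<le> 0" "0 \<le> Re (\<phi> (2*pi))" using True \<phi>end by auto
    then obtain x where "Re (\<phi> x) = 0" using IVT'[of "\<lambda>x. Re (\<phi> x)" 0 0 "2*pi"] cont\<phi> by auto
    then show False using Re_ne by blast
  next
    case False
    have "Re (\<phi> (2*pi)) \<le> 0" "0 \<le> Re (\<phi> 0)" using False \<phi>end by auto
    then obtain x where "Re (\<phi> x) = 0" using IVT2'[of "\<lambda>x. Re (\<phi> x)" "2*pi" 0 0] cont\<phi> by auto
    then show False using Re_ne by blast
  qed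
qed

lemma level_sub:
  assumes "s \<in> Sset r m n" "1 \<le> n" "cmod \<alpha> < 2 * dl n"
  shows "Level a r m s \<alpha> \<subseteq> ball 0 (1/2) \<times> ball 0 (1 - 1/4)"
proof
  fix p assume p: "p \<in> Level a r m s \<alpha>"
  obtain z w where pzw: "p = (z, w)" by fastforce
  have z: "cmod z < 1/2" using p pzw by (auto simp: Level_def Omega_iff)
  have "cmod w \<le> 1/2" using root_bound[OF assms, of z w] p pzw z by (auto simp: Level_def)
  then show "p \<in> ball 0 (1/2) \<times> ball 0 (1 - 1/4)" using z pzw by simp
qed

lemma level_disj:
  assumes "s1 \<in> Sset r m n" "s2 \<in> Sset r m n" "cmod \<alpha> < 2 * dl n" "s1 \<noteq> s2"
  shows "Level a r m s1 \<alpha> \<inter> Level a r m s2 \<alpha> = {}"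
proof (rule ccontr)
  assume "Level a r m s1 \<alpha> \<inter> Level a r m s2 \<alpha> \<noteq> {}"
  then obtain z w where zw: "(z, w) \<in> Level a r m s1 \<alpha>" "(z, w) \<in> Level a r m s2 \<alpha>" by auto
  have "cmod z \<le> 1/2" "cmod w \<le> 1" using zw by (auto simp: Level_def Omega_iff)
  moreover have "cmod (P s1 (z, w)) < 2 * dl n" "cmod (P s2 (z, w)) < 2 * dl n"
    using zw assms(3) by (auto simp: Level_def)
  ultimately show False using disj[OF assms(1,2)] assms(4) by blast
qed

end

instance complex :: field_gcd ..

lemma deg_step:
  fixes p q :: "'a::idom poly"
  assumes dp: "degree p = d" and d: "1 \<le> d" and lp: "lead_coeff p = 1" and dq: "degree q \<le> 1"
  shows "degree ((p - [:c:])^2 - q) = 2*d \<and> lead_coeff ((p - [:c:])^2 - q) = 1"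
proof -
  have e1: "p - [:c:] = p + [:-c:]" by simp
  have d1: "degree (p - [:c:]) = d" unfolding e1 using dp d by (subst degree_add_eq_left) auto
  have l1: "lead_coeff (p - [:c:]) = 1" using d1 dp lp d by (simp add: coeff_pCons split: nat.split)
  then have ne: "p - [:c:] \<noteq> 0" by auto
  have d2: "degree ((p - [:c:])^2) = 2 * d" using degree_power_eq[OF ne, of 2] d1 by simp
  have l2: "lead_coeff ((p - [:c:])^2) = 1" using l1 by (simp add: lead_coeff_power)
  have e2: "(p - [:c:])^2 - q = (p - [:c:])^2 + (- q)" by simp
  have d3: "degree ((p - [:c:])^2 - q) = 2 * d" unfolding e2 using d2 dq d
    by (subst degree_add_eq_left) auto
  have "coeff q (2 * d) = 0" using dq d by (intro coeff_eq_0) auto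
  then have l3: "lead_coeff ((p - [:c:])^2 - q) = 1" using d3 d2 l2 by simp
  show ?thesis using d3 l3 by simp
qed

context cons begin

definition Az :: "complex \<Rightarrow> nat \<Rightarrow> complex poly" where
  "Az z k = (if odd k then [:z - a k:] else [:z - a k, 1/100:])"

fun Qz :: "complex \<Rightarrow> complex list \<Rightarrow> complex poly" where
  "Qz z [] = [:0, 1:]"
| "Qz z (\<sigma> # s) = (Qz z s - [:\<sigma>:])^2 - Polynomial.smult (complex_of_real (eps r m (Suc (length s)))) (Az z (Suc (length s)))"

definition Ap :: "nat \<Rightarrow> complex poly poly" where
  "Ap k = (if odd k then [:[:- a k, 1:]:] else [:[:- a k, 1:], [:1/100:]:])"

fun Qp :: "complex list \<Rightarrow> complex poly poly" where
  "Qp [] = [:0, 1:]"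
| "Qp (\<sigma> # s) = (Qp s - [:[:\<sigma>:]:])^2 - Polynomial.smult [:complex_of_real (eps r m (Suc (length s))):] (Ap (Suc (length s)))"

lemma poly_Qz: "poly (Qz z s) w = P s (z, w)"
  by (induction s) (auto simp: Pfun.simps(2) Az_def Afun_def algebra_simps)

lemma map_Qp: "map_poly (\<lambda>c. poly c z) (Qp s) = Qz z s"
proof -
  interpret h: map_poly_comm_ring_hom "\<lambda>c. poly c z" ..
  show ?thesis
  proof (induction s)
    case Nil then show ?case by simp
  next
    case (Cons \<sigma> s)
    have "map_poly (\<lambda>c. poly c z) (Ap k) = Az z k" for k
      by (simp add: Ap_def Az_def)
    then show ?case using Cons by (simp add: hom_distribs)
  qed
qed

lemma deg_Qz: "degree (Qz z s) = 2 ^ length s \<and> lead_coeff (Qz z s) = 1"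
proof (induction s)
  case Nil then show ?case by simp
next
  case (Cons \<sigma> s)
  have "degree (Polynomial.smult (complex_of_real (eps r m (Suc (length s)))) (Az z (Suc (length s)))) \<le> 1"
    by (rule order_trans[OF degree_smult_le]) (simp add: Az_def)
  from deg_step[OF conjunct1[OF Cons] _ conjunct2[OF Cons] this, of \<sigma>]
  show ?case by (simp only: Qz.simps length_Cons power_Suc one_le_power, simp)
qed

lemma deg_Qp: "degree (Qp s) = 2 ^ length s \<and> lead_coeff (Qp s) = 1"
proof (induction s)
  case Nil then show ?case by simp
next
  case (Cons \<sigma> s)
  have "degree (Polynomial.smult [:complex_of_real (eps r m (Suc (length s))):] (Ap (Suc (length s)))) \<le> 1"
    by (rule order_trans[OF degree_smult_le]) (simp add: Ap_def)
  from deg_step[OF conjunct1[OF Cons] _ conjunct2[OF Cons] this, of "[:\<sigma>:]"]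
  show ?case by (simp only: Qp.simps length_Cons power_Suc one_le_power, simp)
qed

definition F :: "complex \<Rightarrow> complex list \<Rightarrow> complex \<Rightarrow> complex poly" where
  "F z s \<alpha> = Qz z s - [:\<alpha>:]"

lemma deg_F:
  assumes "1 \<le> length s"
  shows "degree (F z s \<alpha>) = 2 ^ length s" "lead_coeff (F z s \<alpha>) = 1" "F z s \<alpha> \<noteq> 0"
proof -
  have dq1: "degree (Qz z s) = 2 ^ length s" using deg_Qz[of z s] by (rule conjunct1)
  have dq2: "lead_coeff (Qz z s) = 1" using deg_Qz[of z s] by (rule conjunct2)
  note dq = dq1 dq2
  have pos: "0 < degree (Qz z s)" using dq by simp
  have "F z s \<alpha> = Qz z s + [:- \<alpha>:]" by (simp add: F_def)
  then have d: "degree (F z s \<alpha>) = degree (Qz z s)" using pos by (simp add: degree_add_eq_left)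
  show "degree (F z s \<alpha>) = 2 ^ length s" using d dq by simp
  have "coeff (F z s \<alpha>) (degree (Qz z s)) = coeff (Qz z s) (degree (Qz z s))"
    using pos by (simp add: F_def coeff_pCons split: nat.split)
  then show l: "lead_coeff (F z s \<alpha>) = 1" using d dq(2) by simp
  then show "F z s \<alpha> \<noteq> 0" by auto
qed

lemma poly_F: "poly (F z s \<alpha>) w = P s (z, w) - \<alpha>"
  by (simp add: F_def poly_Qz)

lemma pderiv_F: "pderiv (F z s \<alpha>) = pderiv (Qz z s)"
  by (simp add: F_def pderiv_diff)

lemma pderiv_Qz_Cons:
  "poly (pderiv (Qz z (\<sigma> # t))) w =
     2 * (P t (z, w) - \<sigma>) * poly (pderiv (Qz z t)) w
     - complex_of_real (eps r m (Suc (length t))) * (if odd (Suc (length t)) then 0 else 1/100)"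
  by (simp add: pderiv_power pderiv_diff pderiv_smult Az_def poly_Qz pderiv_pCons)

end

lemma card_roots_rsq:
  fixes p :: "complex poly"
  assumes "rsquarefree p"
  shows "card {x. poly p x = 0} = degree p"
proof -
  have p0: "p \<noteq> 0" using assms by (simp add: rsquarefree_def)
  have "degree p = degree (Polynomial.smult (lead_coeff p) (\<Prod>z | poly p z = 0. [:-z, 1:]))"
    using complex_poly_decompose_rsquarefree[OF assms] by simp
  also have "\<dots> = degree (\<Prod>z | poly p z = 0. [:-z, 1:])" using p0 by simp
  also have "\<dots> = (\<Sum>z | poly p z = 0. degree [:-z, 1:])"
    by (rule degree_prod_eq_sum_degree) auto
  also have "\<dots> = card {x. poly p x = 0}" by simp
  finally show ?thesis by simp
qed

lemma res_iff:
  fixes f :: "complex poly"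
  assumes f0: "f \<noteq> 0"
  shows "resultant f (pderiv f) \<noteq> 0 \<longleftrightarrow> rsquarefree f"
proof
  assume res: "resultant f (pderiv f) \<noteq> 0"
  have dg: "degree (gcd f (pderiv f)) = 0" using res div_exp_Lazard_gcd.resultant_0_gcd by blast
  show "rsquarefree f" unfolding rsquarefree_roots
  proof (intro allI notI)
    fix x assume h: "poly f x = 0 \<and> poly (pderiv f) x = 0"
    then have "[:-x, 1:] dvd gcd f (pderiv f)" by (simp add: poly_eq_0_iff_dvd)
    moreover have "gcd f (pderiv f) \<noteq> 0" using f0 by simp
    ultimately have "degree [:-x, 1:] \<le> degree (gcd f (pderiv f))" by (rule dvd_imp_degree_le)
    then show False using dg by simp
  qed
next
  assume rs: "rsquarefree f"
  show "resultant f (pderiv f) \<noteq> 0"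
  proof
    assume "resultant f (pderiv f) = 0"
    then have "degree (gcd f (pderiv f)) \<noteq> 0" using div_exp_Lazard_gcd.resultant_0_gcd by blast
    then have "\<not> constant (poly (gcd f (pderiv f)))" by (simp add: constant_degree)
    then obtain x where x: "poly (gcd f (pderiv f)) x = 0" using fundamental_theorem_of_algebra by blast
    then have "[:-x, 1:] dvd gcd f (pderiv f)" by (simp add: poly_eq_0_iff_dvd)
    then have "[:-x, 1:] dvd f" "[:-x, 1:] dvd pderiv f" by (auto intro: dvd_trans)
    then have "poly f x = 0" "poly (pderiv f) x = 0" by (simp_all add: poly_eq_0_iff_dvd)
    then show False using rs unfolding rsquarefree_roots by blast
  qed
qed

context cons begin

lemma fibre_eq:
  assumes s: "s \<in> Sset r m n" and n: "1 \<le> n" and al: "cmod \<alpha> < 2 * dl n" and z: "cmod z < 1/2"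
  shows "fibre (Level a r m s \<alpha>) z = {w. poly (F z s \<alpha>) w = 0}"
proof -
  have "(z, w) \<in> Level a r m s \<alpha> \<longleftrightarrow> poly (F z s \<alpha>) w = 0" for w
  proof
    assume "poly (F z s \<alpha>) w = 0"
    then have eq: "P s (z, w) = \<alpha>" by (simp add: poly_F)
    have "cmod w \<le> 1/2" using root_bound[OF s n al _ eq] z by simp
    then show "(z, w) \<in> Level a r m s \<alpha>" using eq z by (simp add: Level_def Omega_iff)
  qed (simp add: Level_def poly_F)
  then show ?thesis by (auto simp: fibre_def)
qed

lemma der_bound:
  "t \<in> Sset r m k \<Longrightarrow> 3/8 \<le> cmod z \<Longrightarrow> cmod z \<le> 1/2 \<Longrightarrow> cmod w \<le> 1/2 \<Longrightarrow>
   cmod (P t (z, w)) < 2 * dl k \<Longrightarrow> dl k / 20 \<le> cmod (poly (pderiv (Qz z t)) w)"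
proof (induction k arbitrary: t)
  case 0 then show ?case by (simp add: pderiv_pCons)
next
  case (Suc k)
  obtain \<sigma> t' where t: "t = \<sigma> # t'" "t' \<in> Sset r m k" "\<sigma> \<in> SigmaSet r m k" using Suc.prems by auto
  define x where "x = P t' (z, w) - \<sigma>"
  define D where "D = poly (pderiv (Qz z t')) w"
  define e where "e = eps r m (Suc k)"
  define d where "d = dl k"
  define y where "y = d / MM k"
  define A where "A = Afun a (Suc k) (z, w)"
  have dpos: "0 < d" using delta_pos by (simp add: d_def)
  have M: "1 \<le> MM k" using M_ge1 by simp
  have ypos: "0 < y" unfolding y_def using dpos M by (intro divide_pos_pos) auto
  have yd: "y \<le> d" unfolding y_def using dpos M by (simp add: divide_le_eq_1 field_simps)
  have ey: "e = y^2 / 2" by (simp add: e_def eps_Suc y_def d_def power_divide)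
  have epos: "0 < e" using eps_pos by (simp add: e_def)
  have w1: "cmod w \<le> 1" using Suc.prems by simp
  have z1: "cmod z \<le> 1/2" using Suc.prems by simp
  have hP: "cmod (P (\<sigma> # t') (z, w)) < 2 * dl (Suc k)" using Suc.prems t by simp
  then have hP1: "cmod (P (\<sigma> # t') (z, w)) \<le> 2 * dl (Suc k) * 1" by simp
  have "cmod (P t' (z, w)) \<le> dl k * 1" using step_u[OF t(2,3) z1 w1 order_refl hP1] .
  then have "cmod (P t' (z, w)) < 2 * dl k" using delta_pos[of k] by simp
  then have IH: "d / 20 \<le> cmod D" using Suc.IH[OF t(2)] Suc.prems by (simp add: D_def d_def)
  have eq: "x^2 = P (\<sigma> # t') (z, w) + complex_of_real e * A"
    using P_Cons[OF t(2), of \<sigma> "(z, w)"] by (simp add: x_def e_def A_def)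
  have Alow: "3/25 \<le> cmod A" using A_lower[of "Suc k" z w] Suc.prems by (simp add: A_def)
  have two: "2 * dl (Suc k) = e * r (Suc k)" using two_delta_Suc by (simp add: e_def)
  have "e * (3/25) - e * r (Suc k) \<le> e * cmod A - cmod (P (\<sigma> # t') (z, w))"
    using Alow hP two epos by (smt (verit) mult_left_mono)
  also have "\<dots> \<le> cmod (x^2)"
  proof -
    have "complex_of_real e * A = x^2 - P (\<sigma> # t') (z, w)" using eq by simp
    then have "e * cmod A = cmod (x^2 - P (\<sigma> # t') (z, w))" using epos by (metis abs_of_pos norm_mult norm_of_real)
    also have "\<dots> \<le> cmod (x^2) + cmod (P (\<sigma> # t') (z, w))" by (rule norm_triangle_ineq4)
    finally show ?thesis by simp
  qed
  finally have "e * (3/25) - e * r (Suc k) \<le> cmod x ^ 2" by (simp add: norm_power)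
  moreover have "e * (1/50) \<le> e * (3/25) - e * r (Suc k)"
  proof -
    have "e * r (Suc k) \<le> e * (1/10)" using r_le[of k] epos by (intro mult_left_mono) auto
    then show ?thesis by linarith
  qed
  moreover have "(y / 10)^2 = e * (1/50)" by (simp add: ey power_divide)
  ultimately have "(y / 10)^2 \<le> cmod x ^ 2" by linarith
  then have xl: "y / 10 \<le> cmod x" using power2_le_imp_le by (metis norm_ge_zero)
  define c where "c = complex_of_real e * (if odd (Suc k) then 0 else 1/100)"
  have pd: "poly (pderiv (Qz z (\<sigma> # t'))) w = 2 * x * D - c"
    using pderiv_Qz_Cons[of z \<sigma> t' w] Sset_length[OF t(2)] by (simp add: x_def D_def e_def c_def)
  have nc: "cmod c \<le> e / 100" using epos by (simp add: norm_mult c_def)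
  have n1: "cmod (2 * x * D) = 2 * cmod x * cmod D" by (simp add: norm_mult)
  have n2: "cmod (2 * x * D) - cmod c \<le> cmod (2 * x * D - c)" by (rule norm_triangle_ineq2)
  have "2 * cmod x * cmod D - e / 100 \<le> cmod (2 * x * D - c)" using n1 n2 nc by linarith
  then have "2 * cmod x * cmod D - e / 100 \<le> cmod (poly (pderiv (Qz z (\<sigma> # t'))) w)"
    unfolding pd .
  moreover have "2 * (y / 10) * (d / 20) \<le> 2 * cmod x * cmod D"
    using xl IH ypos dpos by (intro mult_mono) auto
  moreover have "2 * (y / 10) * (y / 20) \<le> 2 * (y / 10) * (d / 20)"
    using yd ypos by simp
  moreover have "dl (Suc k) / 20 \<le> 2 * (y / 10) * (y / 20) - e / 100"
  proof -
    have "dl (Suc k) = y^2 * r (Suc k) / 4" using two ey by simp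
    moreover have "y^2 * r (Suc k) \<le> y^2 * (1/10)" using r_le[of k] ypos by (intro mult_left_mono) auto
    moreover have "2 * (y / 10) * (y / 20) = y^2 / 100" by (simp add: power2_eq_square)
    ultimately have h1: "dl (Suc k) \<le> y^2 / 40" by simp
    have h3: "2 * (y / 10) * (y / 20) = y^2 / 100" by (simp add: power2_eq_square)
    show ?thesis unfolding h3 ey using h1 delta_pos[of "Suc k"] by simp
  qed
  ultimately have "dl (Suc k) / 20 \<le> cmod (poly (pderiv (Qz z (\<sigma> # t'))) w)" by linarith
  then show ?case using t(1) by simp
qed

lemma rsq:
  assumes s: "s \<in> Sset r m n" and n: "1 \<le> n" and al: "cmod \<alpha> < 2 * dl n"
    and z: "3/8 \<le> cmod z" "cmod z < 1/2"
  shows "rsquarefree (F z s \<alpha>)"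
  unfolding rsquarefree_roots
proof (intro allI notI)
  fix w assume h: "poly (F z s \<alpha>) w = 0 \<and> poly (pderiv (F z s \<alpha>)) w = 0"
  then have eq: "P s (z, w) = \<alpha>" by (simp add: poly_F)
  have w: "cmod w \<le> 1/2" using root_bound[OF s n al _ eq] z by simp
  have "dl n / 20 \<le> cmod (poly (pderiv (Qz z s)) w)"
    using der_bound[OF s z(1) _ w] z eq al by simp
  then show False using h delta_pos[of n] by (simp add: pderiv_F)
qed

lemma card_annulus:
  assumes s: "s \<in> Sset r m n" and n: "1 \<le> n" and al: "cmod \<alpha> < 2 * dl n"
    and z: "3/8 \<le> cmod z" "cmod z < 1/2"
  shows "card (fibre (Level a r m s \<alpha>) z) = 2 ^ n"
proof -
  have l: "length s = n" using Sset_length[OF s] .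
  have "card (fibre (Level a r m s \<alpha>) z) = card {w. poly (F z s \<alpha>) w = 0}"
    using fibre_eq[OF s n al z(2)] by simp
  also have "\<dots> = degree (F z s \<alpha>)" by (rule card_roots_rsq[OF rsq[OF assms]])
  also have "\<dots> = 2 ^ n" using deg_F(1)[of s z \<alpha>] l n by simp
  finally show ?thesis .
qed

definition Fp :: "complex list \<Rightarrow> complex \<Rightarrow> complex poly poly" where
  "Fp s \<alpha> = Qp s - [:[:\<alpha>:]:]"

definition R :: "complex list \<Rightarrow> complex \<Rightarrow> complex poly" where
  "R s \<alpha> = resultant (Fp s \<alpha>) (pderiv (Fp s \<alpha>))"

lemma map_Fp: "map_poly (\<lambda>c. poly c z) (Fp s \<alpha>) = F z s \<alpha>"
proof -
  interpret h: map_poly_comm_ring_hom "\<lambda>c. poly c z" ..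
  show ?thesis by (simp add: Fp_def F_def hom_distribs map_Qp)
qed

lemma deg_Fp:
  assumes "1 \<le> length s"
  shows "degree (Fp s \<alpha>) = 2 ^ length s"
proof -
  have dq1: "degree (Qp s) = 2 ^ length s" using deg_Qp[of s] by (rule conjunct1)
  have pos: "0 < degree (Qp s)" using dq1 by simp
  have "Fp s \<alpha> = Qp s + [:- [:\<alpha>:]:]" by (simp add: Fp_def)
  then have d: "degree (Fp s \<alpha>) = degree (Qp s)" using pos by (simp add: degree_add_eq_left)
  then show ?thesis using dq1 by simp
qed

lemma poly_R:
  assumes "1 \<le> length s"
  shows "poly (R s \<alpha>) z = resultant (F z s \<alpha>) (pderiv (F z s \<alpha>))"
proof -
  have d1: "degree (map_poly (\<lambda>c. poly c z) (Fp s \<alpha>)) = degree (Fp s \<alpha>)"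
    using map_Fp deg_F(1)[OF assms] deg_Fp[OF assms] by simp
  have d2: "degree (map_poly (\<lambda>c. poly c z) (pderiv (Fp s \<alpha>))) = degree (pderiv (Fp s \<alpha>))"
    using d1 by (simp add: poly_hom.map_poly_pderiv degree_pderiv)
  show ?thesis
    using poly_hom.resultant_map_poly[OF d1 d2] by (simp add: R_def poly_hom.map_poly_pderiv map_Fp)
qed

lemma degree_over:
  assumes s: "s \<in> Sset r m n" and n: "1 \<le> n" and al: "cmod \<alpha> < 2 * dl n"
  shows "degree_over_z (Level a r m s \<alpha>) (2 ^ n)"
proof -
  have l: "length s = n" using Sset_length[OF s] .
  have l1: "1 \<le> length s" using l n by simp
  define E where "E = {z. poly (R s \<alpha>) z = 0}"
  define z0 :: complex where "z0 = 2/5"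
  have z0: "3/8 \<le> cmod z0" "cmod z0 < 1/2" by (simp_all add: z0_def)
  have "poly (R s \<alpha>) z0 \<noteq> 0"
    using poly_R[OF l1] res_iff[OF deg_F(3)[OF l1]] rsq[OF s n al z0] by simp
  then have R0: "R s \<alpha> \<noteq> 0" by auto
  have finE: "finite E" unfolding E_def using poly_roots_finite[OF R0] .
  have A: "\<forall>z\<in>ball 0 (1/2). finite (fibre (Level a r m s \<alpha>) z) \<and> card (fibre (Level a r m s \<alpha>) z) \<le> 2 ^ n"
  proof
    fix z :: complex assume "z \<in> ball 0 (1/2)"
    then have z: "cmod z < 1/2" by simp
    have fe: "fibre (Level a r m s \<alpha>) z = {w. poly (F z s \<alpha>) w = 0}" by (rule fibre_eq[OF s n al z])
    show "finite (fibre (Level a r m s \<alpha>) z) \<and> card (fibre (Level a r m s \<alpha>) z) \<le> 2 ^ n"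
      unfolding fe using poly_roots_finite[OF deg_F(3)[OF l1]]
        card_poly_roots_bound[OF deg_F(3)[OF l1]] deg_F(1)[OF l1] l by simp
  qed
  have B: "\<forall>z\<in>ball 0 (1/2). \<exists>e>0. ball z e \<inter> E \<subseteq> {z}"
  proof
    fix z :: complex assume "z \<in> ball 0 (1/2)"
    obtain e where e: "0 < e" "\<forall>x\<in>E. x \<noteq> z \<longrightarrow> e \<le> dist z x" using finite_set_avoid[OF finE] by blast
    show "\<exists>e>0. ball z e \<inter> E \<subseteq> {z}"
      using e by (intro exI[of _ e]) (auto simp: dist_commute)
  qed
  have C: "\<forall>z\<in>ball 0 (1/2) - E. card (fibre (Level a r m s \<alpha>) z) = 2 ^ n"
  proof
    fix z :: complex assume zz: "z \<in> ball 0 (1/2) - E"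
    then have z: "cmod z < 1/2" by simp
    have "resultant (F z s \<alpha>) (pderiv (F z s \<alpha>)) \<noteq> 0" using zz poly_R[OF l1] by (simp add: E_def)
    then have rs: "rsquarefree (F z s \<alpha>)" using res_iff[OF deg_F(3)[OF l1]] by simp
    show "card (fibre (Level a r m s \<alpha>) z) = 2 ^ n"
      using fibre_eq[OF s n al z] card_roots_rsq[OF rs] deg_F(1)[OF l1] l by simp
  qed
  show ?thesis unfolding degree_over_z_def using A B C by blast
qed

end

lemma root_cont:
  fixes Fz :: "complex \<Rightarrow> complex poly"
  assumes lc: "\<And>z. lead_coeff (Fz z) = 1" and dg: "\<And>z. degree (Fz z) = d"
    and cont: "\<And>w. continuous_on UNIV (\<lambda>z. poly (Fz z) w)"
    and r0: "poly (Fz z0) w0 = 0" and eta: "0 < \<eta>"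
  shows "eventually (\<lambda>z. \<exists>w. poly (Fz z) w = 0 \<and> dist w w0 < \<eta>) (nhds z0)"
proof -
  have "0 < \<eta> ^ d" using eta by simp
  then obtain \<delta> where \<delta>: "0 < \<delta>" "\<And>z. dist z z0 < \<delta> \<Longrightarrow> dist (poly (Fz z) w0) (poly (Fz z0) w0) < \<eta> ^ d"
    using cont[of w0] unfolding continuous_on_iff by blast
  show ?thesis unfolding eventually_nhds_metric
  proof (intro exI[of _ \<delta>] conjI allI impI)
    show "0 < \<delta>" by fact
    fix z assume z: "dist z z0 < \<delta>"
    have small: "cmod (poly (Fz z) w0) < \<eta> ^ d" using \<delta>(2)[OF z] r0 by (simp add: dist_norm)
    obtain rt where rt: "Polynomial.smult (lead_coeff (Fz z)) (\<Prod>i<degree (Fz z). [:- rt i, 1:]) = Fz z"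
      using complex_poly_decompose' by blast
    then have eq: "Fz z = (\<Prod>i<d. [:- rt i, 1:])" using lc[of z] dg[of z] by simp
    have pv: "poly (Fz z) v = (\<Prod>i<d. v - rt i)" for v unfolding eq by (simp add: poly_prod)
    show "\<exists>w. poly (Fz z) w = 0 \<and> dist w w0 < \<eta>"
    proof (rule ccontr)
      assume "\<not> ?thesis"
      moreover have "poly (Fz z) (rt i) = 0" if "i < d" for i
        unfolding pv using that by (subst prod_zero_iff) auto
      ultimately have far: "\<eta> \<le> cmod (w0 - rt i)" if "i < d" for i
        using that by (fastforce simp: dist_norm norm_minus_commute)
      have "\<eta> ^ d = (\<Prod>i<d. \<eta>)" by simp
      also have "\<dots> \<le> (\<Prod>i<d. cmod (w0 - rt i))" using far eta by (intro prod_mono) auto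
      also have "\<dots> = cmod (poly (Fz z) w0)" unfolding pv by (simp add: prod_norm)
      finally show False using small by simp
    qed
  qed
qed

lemma finite_sep:
  fixes S :: "'a::metric_space set"
  assumes "finite S"
  shows "\<exists>\<rho>>0. \<forall>x\<in>S. \<forall>y\<in>S. x \<noteq> y \<longrightarrow> \<rho> \<le> dist x y"
proof -
  define D where "D = (\<lambda>(x, y). dist x y) ` {(x, y). x \<in> S \<and> y \<in> S \<and> x \<noteq> y}"
  have fD: "finite D" unfolding D_def using assms by (intro finite_imageI) (auto intro: finite_subset[of _ "S \<times> S"])
  show ?thesis
  proof (cases "D = {}")
    case True then show ?thesis by (intro exI[of _ 1]) (auto simp: D_def)
  next
    case False
    have "0 < Min D" using fD False by (subst Min_gr_iff) (auto simp: D_def)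
    moreover have "Min D \<le> dist x y" if "x \<in> S" "y \<in> S" "x \<noteq> y" for x y
      using fD that by (intro Min_le) (auto simp: D_def)
    ultimately show ?thesis by blast
  qed
qed

lemma covering_roots:
  fixes Fz :: "complex \<Rightarrow> complex poly" and K :: "complex set"
  assumes lc: "\<And>z. lead_coeff (Fz z) = 1" and dg: "\<And>z. degree (Fz z) = d"
    and cont: "\<And>w. continuous_on UNIV (\<lambda>z. poly (Fz z) w)"
    and card: "\<And>z. z \<in> K \<Longrightarrow> card {w. poly (Fz z) w = 0} = d" and dpos: "0 < d"
    and ceq: "c = {(z, w). z \<in> K \<and> poly (Fz z) w = 0}"
  shows "covering_space c fst K"
proof -
  have F0: "Fz z \<noteq> 0" for z using lc[of z] by auto
  have finR: "finite {w. poly (Fz z) w = 0}" for z using poly_roots_finite[OF F0] .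
  have RC: "eventually (\<lambda>z. \<exists>w. poly (Fz z) w = 0 \<and> dist w w0 < \<eta>) (nhds z0)"
    if "poly (Fz z0) w0 = 0" "0 < \<eta>" for z0 w0 \<eta>
    by (rule root_cont[OF lc dg cont that])
  show ?thesis
  proof (rule covering_spaceI)
    show "continuous_on c fst" by (intro continuous_intros)
    show "fst ` c = K"
    proof
      show "fst ` c \<subseteq> K" unfolding ceq by auto
      show "K \<subseteq> fst ` c"
      proof
        fix z assume z: "z \<in> K"
        then have "{w. poly (Fz z) w = 0} \<noteq> {}" using card[OF z] dpos by (metis card.empty less_irrefl)
        then obtain w where "poly (Fz z) w = 0" by blast
        then show "z \<in> fst ` c" using z unfolding ceq by (auto intro: image_eqI[of _ _ "(z, w)"])
      qed
    qed
    fix z0 assume z0: "z0 \<in> K"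
    define Z0 where "Z0 = {w. poly (Fz z0) w = 0}"
    have finZ0: "finite Z0" using finR by (simp add: Z0_def)
    obtain \<rho> where \<rho>: "0 < \<rho>" "\<And>x y. x \<in> Z0 \<Longrightarrow> y \<in> Z0 \<Longrightarrow> x \<noteq> y \<Longrightarrow> \<rho> \<le> dist x y"
      using finite_sep[OF finZ0] by blast
    define h where "h = \<rho> / 2"
    have hpos: "0 < h" using \<rho> by (simp add: h_def)
    have disjb: "x = y" if "x \<in> Z0" "y \<in> Z0" "dist w x < h" "dist w y < h" for x y w
    proof (rule ccontr)
      assume "x \<noteq> y"
      then have "\<rho> \<le> dist x y" using \<rho>(2) that by blast
      moreover have "dist x y \<le> dist w x + dist w y" by (metis dist_commute dist_triangle)
      ultimately show False using that by (simp add: h_def)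
    qed
    have "\<forall>x\<in>Z0. eventually (\<lambda>z. \<exists>w. poly (Fz z) w = 0 \<and> dist w x < h) (nhds z0)"
    proof
      fix x assume "x \<in> Z0"
      then have "poly (Fz z0) x = 0" by (simp add: Z0_def)
      from RC[OF this hpos] show "eventually (\<lambda>z. \<exists>w. poly (Fz z) w = 0 \<and> dist w x < h) (nhds z0)" .
    qed
    from eventually_ball_finite[OF finZ0 this]
    have "eventually (\<lambda>z. \<forall>x\<in>Z0. \<exists>w. poly (Fz z) w = 0 \<and> dist w x < h) (nhds z0)" .
    then obtain \<delta> where \<delta>: "0 < \<delta>" "\<And>z. dist z z0 < \<delta> \<Longrightarrow> \<forall>x\<in>Z0. \<exists>w. poly (Fz z) w = 0 \<and> dist w x < h"
      unfolding eventually_nhds_metric by blast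
    define U where "U = K \<inter> ball z0 \<delta>"
    have cover: "\<exists>x\<in>Z0. dist w x < h" if z: "z \<in> U" and w: "poly (Fz z) w = 0" for z w
    proof -
      have zK: "z \<in> K" and zb: "dist z z0 < \<delta>" using z by (auto simp: U_def dist_commute)
      define \<phi> where "\<phi> = (\<lambda>x. SOME w. poly (Fz z) w = 0 \<and> dist w x < h)"
      have \<phi>: "poly (Fz z) (\<phi> x) = 0 \<and> dist (\<phi> x) x < h" if "x \<in> Z0" for x
      proof -
        have "\<exists>w. poly (Fz z) w = 0 \<and> dist w x < h" using \<delta>(2)[OF zb] that by blast
        then show ?thesis unfolding \<phi>_def by (rule someI_ex)
      qed
      have inj: "inj_on \<phi> Z0"
      proof (rule inj_onI)
        fix x y assume xy: "x \<in> Z0" "y \<in> Z0" "\<phi> x = \<phi> y"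
        have "dist (\<phi> x) x < h" using \<phi>[OF xy(1)] by simp
        moreover have "dist (\<phi> x) y < h" using \<phi>[OF xy(2)] xy(3) by simp
        ultimately show "x = y" using disjb[OF xy(1,2)] by blast
      qed
      have sub: "\<phi> ` Z0 \<subseteq> {w. poly (Fz z) w = 0}" using \<phi> by auto
      have "card (\<phi> ` Z0) = card {w. poly (Fz z) w = 0}"
        using card_image[OF inj] card[OF zK] card[OF z0] by (simp add: Z0_def)
      then have "\<phi> ` Z0 = {w. poly (Fz z) w = 0}" using card_subset_eq[OF finR sub] by blast
      then obtain x where "x \<in> Z0" "w = \<phi> x" using w by blast
      then show ?thesis using \<phi> by blast
    qed
    have uniq: "w1 = w2" if uu: "z \<in> U" "x \<in> Z0" "poly (Fz z) w1 = 0" "poly (Fz z) w2 = 0"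
      "dist w1 x < h" "dist w2 x < h" for z x w1 w2
    proof (rule ccontr)
      assume ne: "w1 \<noteq> w2"
      define \<phi> where "\<phi> = (\<lambda>x. SOME w. poly (Fz z) w = 0 \<and> dist w x < h)"
      have zK: "z \<in> K" and zb: "dist z z0 < \<delta>" using uu by (auto simp: U_def dist_commute)
      have \<phi>: "poly (Fz z) (\<phi> x) = 0 \<and> dist (\<phi> x) x < h" if "x \<in> Z0" for x
      proof -
        have "\<exists>w. poly (Fz z) w = 0 \<and> dist w x < h" using \<delta>(2)[OF zb] that by blast
        then show ?thesis unfolding \<phi>_def by (rule someI_ex)
      qed
      have inj: "inj_on \<phi> Z0"
      proof (rule inj_onI)
        fix x y assume xy: "x \<in> Z0" "y \<in> Z0" "\<phi> x = \<phi> y"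
        have "dist (\<phi> x) x < h" using \<phi>[OF xy(1)] by simp
        moreover have "dist (\<phi> x) y < h" using \<phi>[OF xy(2)] xy(3) by simp
        ultimately show "x = y" using disjb[OF xy(1,2)] by blast
      qed
      have sub: "\<phi> ` Z0 \<subseteq> {w. poly (Fz z) w = 0}" using \<phi> by auto
      have "card (\<phi> ` Z0) = card {w. poly (Fz z) w = 0}"
        using card_image[OF inj] card[OF zK] card[OF z0] by (simp add: Z0_def)
      then have im: "\<phi> ` Z0 = {w. poly (Fz z) w = 0}" using card_subset_eq[OF finR sub] by blast
      obtain x1 where x1: "x1 \<in> Z0" "w1 = \<phi> x1" using im uu(3) by blast
      obtain x2 where x2: "x2 \<in> Z0" "w2 = \<phi> x2" using im uu(4) by blast
      have "dist w1 x1 < h" using \<phi>[OF x1(1)] x1(2) by simp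
      then have "x1 = x" using disjb[OF x1(1) uu(2)] uu(5) by blast
      have "dist w2 x2 < h" using \<phi>[OF x2(1)] x2(2) by simp
      then have "x2 = x" using disjb[OF x2(1) uu(2)] uu(6) by blast
      then show False using \<open>x1 = x\<close> ne x1 x2 by simp
    qed
    define q where "q = (\<lambda>x z. THE w. poly (Fz z) w = 0 \<and> dist w x < h)"
    have q: "poly (Fz z) (q x z) = 0 \<and> dist (q x z) x < h" if qq: "z \<in> U" "x \<in> Z0" for x z
    proof -
      have zb: "dist z z0 < \<delta>" using qq by (auto simp: U_def dist_commute)
      obtain w where w: "poly (Fz z) w = 0" "dist w x < h" using \<delta>(2)[OF zb] qq(2) by blast
      have "poly (Fz z) (q x z) = 0 \<and> dist (q x z) x < h"
        unfolding q_def by (rule theI[of _ w]) (use w uniq[OF qq(1,2)] in auto)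
      then show ?thesis .
    qed
    have qu: "q x z = w" if "z \<in> U" "x \<in> Z0" "poly (Fz z) w = 0" "dist w x < h" for x z w
      using uniq[OF that(1,2) _ that(3) _ that(4)] q[OF that(1,2)] by blast
    have contq: "continuous_on U (q x)" if x: "x \<in> Z0" for x
      unfolding continuous_on_iff
    proof (intro ballI allI impI)
      fix z1 e assume z1: "z1 \<in> U" and e: "0 < (e::real)"
      define w1 where "w1 = q x z1"
      have w1: "poly (Fz z1) w1 = 0" "dist w1 x < h" using q[OF z1 x] by (auto simp: w1_def)
      define \<eta> where "\<eta> = min e (h - dist w1 x)"
      have eta: "0 < \<eta>" using e w1 by (simp add: \<eta>_def)
      obtain d1 where d1: "0 < d1" "\<And>z. dist z z1 < d1 \<Longrightarrow> \<exists>w. poly (Fz z) w = 0 \<and> dist w w1 < \<eta>"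
        using RC[OF w1(1) eta] unfolding eventually_nhds_metric by blast
      show "\<exists>d>0. \<forall>z\<in>U. dist z z1 < d \<longrightarrow> dist (q x z) (q x z1) < e"
      proof (intro exI[of _ d1] conjI ballI impI)
        show "0 < d1" by fact
        fix z assume z: "z \<in> U" "dist z z1 < d1"
        obtain w where w: "poly (Fz z) w = 0" "dist w w1 < \<eta>" using d1(2)[OF z(2)] by blast
        have "dist w x \<le> dist w w1 + dist w1 x" by (rule dist_triangle)
        then have "dist w x < h" using w(2) by (simp add: \<eta>_def)
        then have "q x z = w" using qu[OF z(1) x w(1)] by simp
        then show "dist (q x z) (q x z1) < e" using w(2) by (simp add: w1_def[symmetric] \<eta>_def)
      qed
    qed
    define V where "V = (\<lambda>x. c \<inter> (ball z0 \<delta> \<times> ball x h))"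
    have Veq: "V x = (\<lambda>z. (z, q x z)) ` U" if x: "x \<in> Z0" for x
    proof
      show "V x \<subseteq> (\<lambda>z. (z, q x z)) ` U"
      proof
        fix p assume p: "p \<in> V x"
        obtain z w where pzw: "p = (z, w)" by fastforce
        have zU: "z \<in> U" and w: "poly (Fz z) w = 0" and wx: "dist w x < h"
          using p pzw by (auto simp: V_def ceq U_def dist_commute)
        have "q x z = w" using qu[OF zU x w wx] .
        then show "p \<in> (\<lambda>z. (z, q x z)) ` U" using pzw zU by auto
      qed
      show "(\<lambda>z. (z, q x z)) ` U \<subseteq> V x"
      proof
        fix p assume "p \<in> (\<lambda>z. (z, q x z)) ` U"
        then obtain z where z: "z \<in> U" "p = (z, q x z)" by auto
        show "p \<in> V x" using q[OF z(1) x] z by (auto simp: V_def ceq U_def dist_commute)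
      qed
    qed
    show "\<exists>T. z0 \<in> T \<and> openin (top_of_set K) T \<and>
             (\<exists>v. \<Union>v = c \<inter> fst -` T \<and> (\<forall>u\<in>v. openin (top_of_set c) u) \<and>
                  pairwise disjnt v \<and> (\<forall>u\<in>v. \<exists>q. homeomorphism u T fst q))"
    proof (intro exI conjI)
      show "z0 \<in> U" using z0 \<delta>(1) by (simp add: U_def)
      show "openin (top_of_set K) U" unfolding U_def by (rule openin_open_Int) simp
      show "\<Union> (V ` Z0) = c \<inter> fst -` U"
      proof
        show "\<Union> (V ` Z0) \<subseteq> c \<inter> fst -` U" by (auto simp: V_def ceq U_def)
        show "c \<inter> fst -` U \<subseteq> \<Union> (V ` Z0)"
        proof
          fix p assume p: "p \<in> c \<inter> fst -` U"
          obtain z w where pzw: "p = (z, w)" by fastforce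
          have zU: "z \<in> U" and w: "poly (Fz z) w = 0" using p pzw by (auto simp: ceq)
          obtain x where x: "x \<in> Z0" "dist w x < h" using cover[OF zU w] by blast
          then have "p \<in> V x" using p pzw zU by (auto simp: V_def U_def dist_commute)
          then show "p \<in> \<Union> (V ` Z0)" using x by blast
        qed
      qed
      show "\<forall>u\<in>V ` Z0. openin (top_of_set c) u"
        unfolding V_def by (auto intro!: openin_open_Int open_Times)
      show "pairwise disjnt (V ` Z0)"
        unfolding pairwise_def disjnt_def
      proof (intro ballI impI)
        fix A B assume A: "A \<in> V ` Z0" and B: "B \<in> V ` Z0" and AB: "A \<noteq> B"
        obtain x where x: "x \<in> Z0" "A = V x" using A by blast
        obtain y where y: "y \<in> Z0" "B = V y" using B by blast
        have "x \<noteq> y" using AB x y by auto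
        then show "A \<inter> B = {}" using x y disjb[of x y] by (auto simp: V_def dist_commute)
      qed
      show "\<forall>u\<in>V ` Z0. \<exists>q. homeomorphism u U fst q"
      proof
        fix u assume "u \<in> V ` Z0"
        then obtain x where x: "x \<in> Z0" "u = V x" by blast
        have "homeomorphism ((\<lambda>z. (z, q x z)) ` U) U fst (\<lambda>z. (z, q x z))"
          unfolding homeomorphism_def
          using contq[OF x(1)] by (auto intro!: continuous_intros simp: image_image)
        then show "\<exists>q. homeomorphism u U fst q" using Veq[OF x(1)] x by auto
      qed
    qed
  qed
qed


context cons begin

lemma covering_level:
  assumes s: "s \<in> Sset r m n" and n: "1 \<le> n" and al: "cmod \<alpha> < 2 * dl n"
  shows "covering_space (Level a r m s \<alpha> \<inter> ({z. 3/8 \<le> cmod z} \<times> UNIV)) fst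
                           {z. 3/8 \<le> cmod z \<and> cmod z < 1/2}"
proof -
  have l: "length s = n" using Sset_length[OF s] .
  have l1: "1 \<le> length s" using l n by simp
  show ?thesis
  proof (rule covering_roots[where Fz = "\<lambda>z. F z s \<alpha>" and d = "2 ^ n"])
    show "lead_coeff (F z s \<alpha>) = 1" for z using deg_F(2)[OF l1] .
    show "degree (F z s \<alpha>) = 2 ^ n" for z using deg_F(1)[OF l1] l by simp
    show "continuous_on UNIV (\<lambda>z. poly (F z s \<alpha>) w)" for w
    proof -
      have "continuous_on UNIV (\<lambda>z. P s (z, w))"
        by (rule continuous_on_compose2[OF cont_P, of UNIV "\<lambda>z. (z, w)"]) (auto intro!: continuous_intros)
      then show ?thesis unfolding poly_F by (intro continuous_intros)
    qed
    show "card {w. poly (F z s \<alpha>) w = 0} = 2 ^ n" if "z \<in> {z. 3/8 \<le> cmod z \<and> cmod z < 1/2}" for z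
      using card_roots_rsq[OF rsq[OF s n al]] that deg_F(1)[OF l1] l by simp
    show "0 < (2::nat) ^ n" by simp
    show "Level a r m s \<alpha> \<inter> ({z. 3/8 \<le> cmod z} \<times> UNIV) =
          {(z, w). z \<in> {z. 3/8 \<le> cmod z \<and> cmod z < 1/2} \<and> poly (F z s \<alpha>) w = 0}"
    proof safe
      fix z w assume "(z, w) \<in> Level a r m s \<alpha>"
      then show "cmod z < 1/2" "poly (F z s \<alpha>) w = 0"
        by (auto simp: Level_def Omega_iff poly_F)
    next
      fix z w assume z: "3/8 \<le> cmod z" "cmod z < 1/2" and w: "poly (F z s \<alpha>) w = 0"
      have "w \<in> fibre (Level a r m s \<alpha>) z" using fibre_eq[OF s n al z(2)] w by simp
      then show "(z, w) \<in> Level a r m s \<alpha>" by (simp add: fibre_def)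
    qed simp
  qed
qed

theorem main:
  assumes "1 \<le> n"
  shows
   "Omega \<inter> closure (Xn a r m (Suc n)) \<subseteq> Xn a r m n
    \<and> (\<forall>s \<sigma>. s \<in> Sset r m n \<and> \<sigma> \<in> SigmaSet r m n \<longrightarrow>
          Omega \<inter> closure (Xs a r m (Suc n) (\<sigma> # s)) \<subseteq> Xint a r m n s \<sigma>
          \<and> Xint a r m n s \<sigma> \<subseteq> Xs a r m n s)
    \<and> (even n \<longrightarrow> \<not> (\<exists>f. continuous_on (ball (a (Suc n)) (r (Suc n))) f \<and>
          (\<forall>\<zeta>\<in>ball (a (Suc n)) (r (Suc n)). (\<zeta>, f \<zeta>) \<in> Xn a r m (Suc n))))
    \<and> (odd n \<longrightarrow> \<not> (\<exists>f. continuous_on (ball (a (Suc n)) (r (Suc n))) f \<and>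
          (\<forall>\<zeta>\<in>ball (a (Suc n)) (r (Suc n)). (\<zeta> - f \<zeta> / 100, f \<zeta>) \<in> Xn a r m (Suc n))))
    \<and> (\<forall>s\<in>Sset r m n. \<forall>\<alpha>::complex. cmod \<alpha> < 2 * delta r m n \<longrightarrow>
          horizontal (Level a r m s \<alpha>)
          \<and> degree_over_z (Level a r m s \<alpha>) (2^n)
          \<and> covering_space (Level a r m s \<alpha> \<inter> ({z. 3/8 \<le> cmod z} \<times> UNIV)) fst
                           {z. 3/8 \<le> cmod z \<and> cmod z < 1/2}
          \<and> (\<forall>z. 3/8 \<le> cmod z \<and> cmod z < 1/2 \<longrightarrow> card (fibre (Level a r m s \<alpha>) z) = 2^n))
    \<and> (\<forall>s1\<in>Sset r m n. \<forall>s2\<in>Sset r m n. \<forall>\<alpha>::complex. cmod \<alpha> < 2 * delta r m n \<and> s1 \<noteq> s2 \<longrightarrow>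
          Level a r m s1 \<alpha> \<inter> Level a r m s2 \<alpha> = {})"
proof (intro conjI allI impI ballI)
  show "Omega \<inter> closure (Xn a r m (Suc n)) \<subseteq> Xn a r m n" by (rule part_i_c)
next
  fix s \<sigma> assume h: "s \<in> Sset r m n \<and> \<sigma> \<in> SigmaSet r m n"
  show "Omega \<inter> closure (Xs a r m (Suc n) (\<sigma> # s)) \<subseteq> Xint a r m n s \<sigma>" using part_i_a h by blast
  show "Xint a r m n s \<sigma> \<subseteq> Xs a r m n s" using part_i_b h by blast
next
  assume ev: "even n"
  show "\<not> (\<exists>f. continuous_on (ball (a (Suc n)) (r (Suc n))) f \<and>
          (\<forall>\<zeta>\<in>ball (a (Suc n)) (r (Suc n)). (\<zeta>, f \<zeta>) \<in> Xn a r m (Suc n)))"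
  proof
    assume "\<exists>f. continuous_on (ball (a (Suc n)) (r (Suc n))) f \<and>
          (\<forall>\<zeta>\<in>ball (a (Suc n)) (r (Suc n)). (\<zeta>, f \<zeta>) \<in> Xn a r m (Suc n))"
    then obtain f where f: "continuous_on (ball (a (Suc n)) (r (Suc n))) f"
      "\<forall>\<zeta>\<in>ball (a (Suc n)) (r (Suc n)). (\<zeta>, f \<zeta>) \<in> Xn a r m (Suc n)" by blast
    show False
    proof (rule no_graph[of n "\<lambda>\<zeta>. (\<zeta>, f \<zeta>)"])
      show "continuous_on (ball (a (Suc n)) (r (Suc n))) (\<lambda>\<zeta>. (\<zeta>, f \<zeta>))"
        using f(1) by (intro continuous_intros)
      show "(\<zeta>, f \<zeta>) \<in> Xn a r m (Suc n)" if "\<zeta> \<in> ball (a (Suc n)) (r (Suc n))" for \<zeta>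
        using f(2) that by blast
      show "Afun a (Suc n) (\<zeta>, f \<zeta>) = \<zeta> - a (Suc n)" for \<zeta>
        using ev by (simp add: Afun_def)
    qed
  qed
next
  assume od: "odd n"
  show "\<not> (\<exists>f. continuous_on (ball (a (Suc n)) (r (Suc n))) f \<and>
          (\<forall>\<zeta>\<in>ball (a (Suc n)) (r (Suc n)). (\<zeta> - f \<zeta> / 100, f \<zeta>) \<in> Xn a r m (Suc n)))"
  proof
    assume "\<exists>f. continuous_on (ball (a (Suc n)) (r (Suc n))) f \<and>
          (\<forall>\<zeta>\<in>ball (a (Suc n)) (r (Suc n)). (\<zeta> - f \<zeta> / 100, f \<zeta>) \<in> Xn a r m (Suc n))"
    then obtain f where f: "continuous_on (ball (a (Suc n)) (r (Suc n))) f"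
      "\<forall>\<zeta>\<in>ball (a (Suc n)) (r (Suc n)). (\<zeta> - f \<zeta> / 100, f \<zeta>) \<in> Xn a r m (Suc n)" by blast
    show False
    proof (rule no_graph[of n "\<lambda>\<zeta>. (\<zeta> - f \<zeta> / 100, f \<zeta>)"])
      show "continuous_on (ball (a (Suc n)) (r (Suc n))) (\<lambda>\<zeta>. (\<zeta> - f \<zeta> / 100, f \<zeta>))"
        using f(1) by (intro continuous_intros) auto
      show "(\<zeta> - f \<zeta> / 100, f \<zeta>) \<in> Xn a r m (Suc n)" if "\<zeta> \<in> ball (a (Suc n)) (r (Suc n))" for \<zeta>
        using f(2) that by blast
      show "Afun a (Suc n) (\<zeta> - f \<zeta> / 100, f \<zeta>) = \<zeta> - a (Suc n)" for \<zeta>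
        using od by (simp add: Afun_def)
    qed
  qed
next
  fix s \<alpha> assume s: "s \<in> Sset r m n" and al: "cmod (\<alpha>::complex) < 2 * delta r m n"
  show "horizontal (Level a r m s \<alpha>)"
    unfolding horizontal_def using level_sub[OF s assms al] by (intro exI[of _ "1/4"]) auto
  show "degree_over_z (Level a r m s \<alpha>) (2^n)" by (rule degree_over[OF s assms al])
  show "covering_space (Level a r m s \<alpha> \<inter> ({z. 3/8 \<le> cmod z} \<times> UNIV)) fst
                           {z. 3/8 \<le> cmod z \<and> cmod z < 1/2}" by (rule covering_level[OF s assms al])
  fix z assume "3/8 \<le> cmod z \<and> cmod z < 1/2"
  then show "card (fibre (Level a r m s \<alpha>) z) = 2^n" using card_annulus[OF s assms al] by blast
next
  fix s1 s2 \<alpha> assume "s1 \<in> Sset r m n" "s2 \<in> Sset r m n"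
    and h: "cmod (\<alpha>::complex) < 2 * delta r m n \<and> s1 \<noteq> s2"
  then show "Level a r m s1 \<alpha> \<inter> Level a r m s2 \<alpha> = {}" using level_disj by blast
qed

end

theorem lemma1:
  fixes a :: "nat \<Rightarrow> complex" and r :: "nat \<Rightarrow> real" and m :: "nat \<Rightarrow> nat" and n :: nat
  assumes "construction a r m" and "n \<ge> 1"
  shows
   \<comment> \<open>(i)\<close>
   "Omega \<inter> closure (Xn a r m (Suc n)) \<subseteq> Xn a r m n
    \<and> (\<forall>s \<sigma>. s \<in> Sset r m n \<and> \<sigma> \<in> SigmaSet r m n \<longrightarrow>
          Omega \<inter> closure (Xs a r m (Suc n) (\<sigma> # s)) \<subseteq> Xint a r m n s \<sigma>
          \<and> Xint a r m n s \<sigma> \<subseteq> Xs a r m n s)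
    \<comment> \<open>(ii)\<close>
    \<and> (even n \<longrightarrow> \<not> (\<exists>f. continuous_on (ball (a (Suc n)) (r (Suc n))) f \<and>
          (\<forall>\<zeta>\<in>ball (a (Suc n)) (r (Suc n)). (\<zeta>, f \<zeta>) \<in> Xn a r m (Suc n))))
    \<and> (odd n \<longrightarrow> \<not> (\<exists>f. continuous_on (ball (a (Suc n)) (r (Suc n))) f \<and>
          (\<forall>\<zeta>\<in>ball (a (Suc n)) (r (Suc n)). (\<zeta> - f \<zeta> / 100, f \<zeta>) \<in> Xn a r m (Suc n))))
    \<comment> \<open>(iii)\<close>
    \<and> (\<forall>s\<in>Sset r m n. \<forall>\<alpha>::complex. cmod \<alpha> < 2 * delta r m n \<longrightarrow>
          horizontal (Level a r m s \<alpha>)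
          \<and> degree_over_z (Level a r m s \<alpha>) (2^n)
          \<and> covering_space (Level a r m s \<alpha> \<inter> ({z. 3/8 \<le> cmod z} \<times> UNIV)) fst
                           {z. 3/8 \<le> cmod z \<and> cmod z < 1/2}
          \<and> (\<forall>z. 3/8 \<le> cmod z \<and> cmod z < 1/2 \<longrightarrow> card (fibre (Level a r m s \<alpha>) z) = 2^n))
    \<and> (\<forall>s1\<in>Sset r m n. \<forall>s2\<in>Sset r m n. \<forall>\<alpha>::complex. cmod \<alpha> < 2 * delta r m n \<and> s1 \<noteq> s2 \<longrightarrow>
          Level a r m s1 \<alpha> \<inter> Level a r m s2 \<alpha> = {})"
proof -
  interpret cons a r m by unfold_locales (rule assms(1))
  show ?thesis using main assms(2) by simp
qed


end
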